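(* In the unit-cost arithmetic model, for every positive integer $N$, all the values $rt_n$, $f_n$, $f_{n,m}$, $f^\le_{n,m}$, $f_{n,m,\mu}$, $f^\le_{n,m,\mu}$ and $\binom{rt_m-1+\mu}{\mu}$, for all $n\in\{1,\dots,N\}$ and positive integers $m,\mu$ with $\mu m\le n$, can be computed using $O(N^2\log N)$ time and space.
   Context: All trees are unlabeled and unordered rooted trees; a forest is a disjoint union of rooted trees. For a forest $F$, $m(F)$ is the maximum number of vertices of a tree of $F$ and $\mu(F)$ the number of trees of $F$ with $m(F)$ vertices. $rt_n$: number of rooted trees on $n$ vertices; $f_n$: number of forests on $n$ vertices; $f_{n,m}$: number with $m(F)=m$; $f^\le_{n,m}$: number with $m(F)\le m$; $f_{n,m,\mu}$: number with $m(F)=m$, $\mu(F)=\mu$; $f^\le_{n,m,\mu}$: number with $m(F)=m$, $\mu(F)\le\mu$. Arithmetic operations on integers are assumed to take constant time, and each stored integer counts as one unit of space. *)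

theory Defs
  imports Complex_Main "HOL-Library.Multiset" "HOL-Library.Landau_Symbols"
begin

text \<open>An unlabeled unordered rooted tree is represented canonically as the multiset
of the subtrees rooted at the children of the root; two such trees are isomorphic
iff they are equal.\<close>

datatype rtree = Node "rtree multiset"

primrec tsize :: "rtree \<Rightarrow> nat" where
  "tsize (Node ts) = Suc (sum_mset (image_mset tsize ts))"

type_synonym forest = "rtree multiset"

definition fsize :: "forest \<Rightarrow> nat" where
  "fsize F = sum_mset (image_mset tsize F)"

definition mF :: "forest \<Rightarrow> nat" where
  "mF F = (if F = {#} then 0 else Max (tsize ` set_mset F))"

definition muF :: "forest \<Rightarrow> nat" where
  "muF F = size (filter_mset (\<lambda>t. tsize t = mF F) F)"

definition rt :: "nat \<Rightarrow> nat" where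
  "rt n = card {t. tsize t = n}"

definition f :: "nat \<Rightarrow> nat" where
  "f n = card {F. fsize F = n}"

definition f_m :: "nat \<Rightarrow> nat \<Rightarrow> nat" where
  "f_m n m = card {F. fsize F = n \<and> mF F = m}"

definition f_le_m :: "nat \<Rightarrow> nat \<Rightarrow> nat" where
  "f_le_m n m = card {F. fsize F = n \<and> mF F \<le> m}"

definition f_m_mu :: "nat \<Rightarrow> nat \<Rightarrow> nat \<Rightarrow> nat" where
  "f_m_mu n m \<mu> = card {F. fsize F = n \<and> mF F = m \<and> muF F = \<mu>}"

definition f_le_m_mu :: "nat \<Rightarrow> nat \<Rightarrow> nat \<Rightarrow> nat" where
  "f_le_m_mu n m \<mu> = card {F. fsize F = n \<and> mF F = m \<and> muF F \<le> \<mu>}"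

datatype query =
    QRt nat | QF nat | QFm nat nat | QFle nat nat
  | QFmmu nat nat nat | QFlemu nat nat nat | QBin nat nat

text \<open>QBin m mu stands for binom(rt_m - 1 + mu, mu); it is required whenever
mu*m \<le> n for some n \<le> N, i.e. whenever mu*m \<le> N.\<close>
fun valid_query :: "nat \<Rightarrow> query \<Rightarrow> bool" where
  "valid_query N (QRt n) = (1 \<le> n \<and> n \<le> N)"
| "valid_query N (QF n) = (1 \<le> n \<and> n \<le> N)"
| "valid_query N (QFm n m) = (1 \<le> n \<and> n \<le> N \<and> 1 \<le> m \<and> m \<le> n)"
| "valid_query N (QFle n m) = (1 \<le> n \<and> n \<le> N \<and> 1 \<le> m \<and> m \<le> n)"
| "valid_query N (QFmmu n m \<mu>) = (1 \<le> n \<and> n \<le> N \<and> 1 \<le> m \<and> 1 \<le> \<mu> \<and> \<mu> * m \<le> n)"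
| "valid_query N (QFlemu n m \<mu>) = (1 \<le> n \<and> n \<le> N \<and> 1 \<le> m \<and> 1 \<le> \<mu> \<and> \<mu> * m \<le> n)"
| "valid_query N (QBin m \<mu>) = (1 \<le> m \<and> 1 \<le> \<mu> \<and> \<mu> * m \<le> N)"

fun qval :: "query \<Rightarrow> int" where
  "qval (QRt n) = int (rt n)"
| "qval (QF n) = int (f n)"
| "qval (QFm n m) = int (f_m n m)"
| "qval (QFle n m) = int (f_le_m n m)"
| "qval (QFmmu n m \<mu>) = int (f_m_mu n m \<mu>)"
| "qval (QFlemu n m \<mu>) = int (f_le_m_mu n m \<mu>)"
| "qval (QBin m \<mu>) = int ((rt m - 1 + \<mu>) choose \<mu>)"

text \<open>Memory: cells indexed by naturals holding unbounded integers; each step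
costs one time unit, each memory cell ever accessed costs one unit of space.\<close>

datatype instr =
    LoadConst nat int
  | Add nat nat nat
  | Sub nat nat nat
  | Mul nat nat nat
  | Div nat nat nat            \<comment> \<open>floor division, x div 0 = 0\<close>
  | LoadInd nat nat
  | StoreInd nat nat
  | JumpPos nat nat
  | Jump nat
  | Halt

type_synonym prog = "instr list"
type_synonym state = "nat \<times> (nat \<Rightarrow> int)"

definition halted :: "prog \<Rightarrow> state \<Rightarrow> bool" where
  "halted P s = (fst s \<ge> length P \<or> P ! fst s = Halt)"

fun exec_instr :: "instr \<Rightarrow> nat \<Rightarrow> (nat \<Rightarrow> int) \<Rightarrow> state" where
  "exec_instr (LoadConst d c) pc M = (Suc pc, M(d := c))"
| "exec_instr (Add d a b) pc M = (Suc pc, M(d := M a + M b))"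
| "exec_instr (Sub d a b) pc M = (Suc pc, M(d := M a - M b))"
| "exec_instr (Mul d a b) pc M = (Suc pc, M(d := M a * M b))"
| "exec_instr (Div d a b) pc M = (Suc pc, M(d := M a div M b))"
| "exec_instr (LoadInd d a) pc M = (Suc pc, M(d := M (nat (M a))))"
| "exec_instr (StoreInd a b) pc M = (Suc pc, M(nat (M a) := M b))"
| "exec_instr (JumpPos a l) pc M = ((if M a > 0 then l else Suc pc), M)"
| "exec_instr (Jump l) pc M = (l, M)"
| "exec_instr Halt pc M = (pc, M)"

fun accessed_instr :: "instr \<Rightarrow> (nat \<Rightarrow> int) \<Rightarrow> nat set" where
  "accessed_instr (LoadConst d c) M = {d}"
| "accessed_instr (Add d a b) M = {d, a, b}"
| "accessed_instr (Sub d a b) M = {d, a, b}"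
| "accessed_instr (Mul d a b) M = {d, a, b}"
| "accessed_instr (Div d a b) M = {d, a, b}"
| "accessed_instr (LoadInd d a) M = {d, a, nat (M a)}"
| "accessed_instr (StoreInd a b) M = {a, b, nat (M a)}"
| "accessed_instr (JumpPos a l) M = {a}"
| "accessed_instr (Jump l) M = {}"
| "accessed_instr Halt M = {}"

definition step :: "prog \<Rightarrow> state \<Rightarrow> state" where
  "step P s = (if halted P s then s else exec_instr (P ! fst s) (fst s) (snd s))"

definition accessed :: "prog \<Rightarrow> state \<Rightarrow> nat set" where
  "accessed P s = (if halted P s then {} else accessed_instr (P ! fst s) (snd s))"

definition exec :: "prog \<Rightarrow> nat \<Rightarrow> state \<Rightarrow> state" where
  "exec P k s = (step P ^^ k) s"

definition used_cells :: "prog \<Rightarrow> nat \<Rightarrow> state \<Rightarrow> nat set" where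
  "used_cells P k s = insert 0 (\<Union>i<k. accessed P (exec P i s))"

definition init :: "nat \<Rightarrow> state" where
  "init N = (0, (\<lambda>_. 0)(0 := int N))"

end

theory Submission
  imports Defs
begin


lemma tsize_pos: "tsize t \<ge> 1" by (cases t) auto

lemma tsize_Node: "tsize (Node F) = Suc (fsize F)" by (simp add: fsize_def)

lemma fsize_add[simp]: "fsize (F + G) = fsize F + fsize G" by (simp add: fsize_def)
lemma fsize_empty[simp]: "fsize {#} = 0" by (simp add: fsize_def)
lemma fsize_add_mset[simp]: "fsize (add_mset t F) = tsize t + fsize F" by (simp add: fsize_def)

lemma tsize_le_fsize: "t \<in># F \<Longrightarrow> tsize t \<le> fsize F"
proof -
  assume "t \<in># F"
  then obtain G where "F = add_mset t G" by (metis multi_member_split)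
  thus ?thesis by simp
qed

lemma size_le_fsize: "size F \<le> fsize F"
proof (induction F)
  case (add x F)
  thus ?case using tsize_pos[of x] by simp
qed simp

lemma fsize_const: "(\<forall>t\<in>#X. tsize t = m) \<Longrightarrow> fsize X = size X * m"
  by (induction X) auto

lemma fsize_filter_le: "fsize (filter_mset P F) \<le> fsize F"
  by (metis fsize_add le_add1 multiset_partition)

lemma fin_forests: "finite {t. tsize t \<le> n} \<Longrightarrow> finite {F. fsize F \<le> n}"
proof -
  assume fin: "finite {t. tsize t \<le> n}"
  have "{F. fsize F \<le> n} \<subseteq> (\<Union>k\<le>n. multisets_of_size {t. tsize t \<le> n} k)"
  proof
    fix F assume "F \<in> {F. fsize F \<le> n}"
    hence h: "fsize F \<le> n" by simp
    have "set_mset F \<subseteq> {t. tsize t \<le> n}" using tsize_le_fsize h by fastforce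
    moreover have "size F \<le> n" using size_le_fsize[of F] h by linarith
    ultimately show "F \<in> (\<Union>k\<le>n. multisets_of_size {t. tsize t \<le> n} k)"
      by (auto simp: multisets_of_size_def)
  qed
  moreover have "finite (\<Union>k\<le>n. multisets_of_size {t. tsize t \<le> n} k)"
    using fin by auto
  ultimately show ?thesis by (rule finite_subset)
qed

lemma fin_trees: "finite {t. tsize t \<le> n}"
proof (induction n)
  case 0
  have "\<not> tsize t \<le> 0" for t using tsize_pos[of t] by linarith
  hence "{t. tsize t \<le> 0} = {}" by blast
  thus ?case by (metis finite.emptyI)
next
  case (Suc n)
  have "{t. tsize t \<le> Suc n} \<subseteq> Node ` {F. fsize F \<le> n}"
  proof
    fix t assume "t \<in> {t. tsize t \<le> Suc n}"
    then show "t \<in> Node ` {F. fsize F \<le> n}" by (cases t) (auto simp: tsize_Node simp del: tsize.simps)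
  qed
  moreover have "finite (Node ` {F. fsize F \<le> n})" using fin_forests[OF Suc.IH] by simp
  ultimately show ?case by (rule finite_subset)
qed

lemma fin_forests': "finite {F. fsize F \<le> n}" using fin_forests[OF fin_trees] .

lemma fin_eq: "finite {F. fsize F = n \<and> Q F}"
  by (rule finite_subset[OF _ fin_forests'[of n]]) auto

lemma fin_teq: "finite {t. tsize t = n}"
  by (rule finite_subset[OF _ fin_trees[of n]]) auto

lemma rt_Suc: "rt (Suc n) = f n"
proof -
  have "{t. tsize t = Suc n} = Node ` {F. fsize F = n}"
  proof (intro set_eqI iffI)
    fix t assume "t \<in> {t. tsize t = Suc n}"
    then show "t \<in> Node ` {F. fsize F = n}" by (cases t) (auto simp: tsize_Node simp del: tsize.simps)
  qed (auto simp: tsize_Node simp del: tsize.simps)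
  moreover have "inj Node" by (auto intro: injI)
  ultimately show ?thesis unfolding rt_def f_def by (simp add: card_image inj_on_def)
qed

lemma f_pos: "f n \<ge> 1"
proof -
  have "fsize (replicate_mset n (Node {#})) = n" by (induction n) auto
  hence "replicate_mset n (Node {#}) \<in> {F. fsize F = n}" by simp
  moreover have "finite {F. fsize F = n}" using fin_eq[of n "\<lambda>_. True"] by simp
  ultimately have "card {F. fsize F = n} > 0" by (auto simp: card_gt_0_iff)
  thus ?thesis unfolding f_def by simp
qed

lemma rt_pos: "m \<ge> 1 \<Longrightarrow> rt m \<ge> 1"
  using rt_Suc[of "m - 1"] f_pos[of "m-1"] by simp

lemma mF_le_iff: "mF F \<le> m \<longleftrightarrow> (\<forall>t\<in>#F. tsize t \<le> m)"
  unfolding mF_def by (cases "F = {#}") (auto simp: Max_le_iff)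

lemma mF_le_fsize: "mF F \<le> fsize F"
  using mF_le_iff tsize_le_fsize by blast

lemma f_eq_fle: "f n = f_le_m n n"
  unfolding f_def f_le_m_def using mF_le_fsize by metis

lemma fle_0: "f_le_m n 0 = (if n = 0 then 1 else 0)"
proof -
  have "{F. fsize F = n \<and> mF F \<le> 0} = (if n = 0 then {{#}} else {})"
  proof -
    have "mF F \<le> 0 \<longleftrightarrow> F = {#}" for F
    proof
      assume a: "mF F \<le> 0"
      show "F = {#}"
      proof (rule ccontr)
        assume "F \<noteq> {#}"
        then obtain t where "t \<in># F" by (meson multiset_nonemptyE)
        hence "tsize t \<le> 0" using a mF_le_iff[of F 0] by blast
        thus False using tsize_pos[of t] by linarith
      qed
    qed (simp add: mF_def)
    thus ?thesis by auto
  qed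
  thus ?thesis unfolding f_le_m_def by simp
qed

lemma mF_mu_iff:
  assumes "m \<ge> 1" "\<mu> \<ge> 1"
  shows "(mF F = m \<and> muF F = \<mu>) \<longleftrightarrow> (\<forall>t\<in>#F. tsize t \<le> m) \<and> size (filter_mset (\<lambda>t. tsize t = m) F) = \<mu>"
proof
  assume h: "mF F = m \<and> muF F = \<mu>"
  then show "(\<forall>t\<in>#F. tsize t \<le> m) \<and> size (filter_mset (\<lambda>t. tsize t = m) F) = \<mu>"
    using mF_le_iff[of F m] by (auto simp: muF_def)
next
  assume h: "(\<forall>t\<in>#F. tsize t \<le> m) \<and> size (filter_mset (\<lambda>t. tsize t = m) F) = \<mu>"
  hence "size (filter_mset (\<lambda>t. tsize t = m) F) \<noteq> 0" using assms by linarith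
  hence "filter_mset (\<lambda>t. tsize t = m) F \<noteq> {#}" by (metis size_empty)
  then obtain t where "t \<in># filter_mset (\<lambda>t. tsize t = m) F" by (meson multiset_nonemptyE)
  hence t: "t \<in># F" "tsize t = m" by auto
  hence "F \<noteq> {#}" by auto
  have "Max (tsize ` set_mset F) = m"
    by (intro Max_eqI) (use t h in auto)
  hence "mF F = m" unfolding mF_def using \<open>F \<noteq> {#}\<close> by simp
  thus "mF F = m \<and> muF F = \<mu>" using h by (simp add: muF_def)
qed

lemma muF_pos: "mF F = m \<Longrightarrow> m \<ge> 1 \<Longrightarrow> muF F \<ge> 1"
proof -
  assume h: "mF F = m" "m \<ge> 1"
  hence ne: "F \<noteq> {#}" by (auto simp: mF_def)
  hence "Max (tsize ` set_mset F) \<in> tsize ` set_mset F" by (intro Max_in) auto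
  then obtain t where "t \<in># F" "Max (tsize ` set_mset F) = tsize t" by (metis imageE)
  hence "t \<in># filter_mset (\<lambda>t. tsize t = mF F) F" using ne by (simp add: mF_def)
  hence "filter_mset (\<lambda>t. tsize t = mF F) F \<noteq> {#}" by (metis empty_iff set_mset_empty)
  hence "size (filter_mset (\<lambda>t. tsize t = mF F) F) \<noteq> 0" by simp
  thus ?thesis unfolding muF_def by linarith
qed

lemma muF_le: "muF F * mF F \<le> fsize F"
proof -
  have "muF F * mF F = fsize (filter_mset (\<lambda>t. tsize t = mF F) F)"
    unfolding muF_def by (subst fsize_const[of _ "mF F"]) auto
  also have "\<dots> \<le> fsize F" by (rule fsize_filter_le)
  finally show ?thesis .
qed

lemma binom_step: "\<mu> \<ge> 1 \<Longrightarrow> ((R + \<mu>) choose \<mu>) * \<mu> = ((R + \<mu> - 1) choose (\<mu> - 1)) * (R + \<mu>)"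
  using times_binomial_minus1_eq[of \<mu> "R + \<mu>"] by (simp add: mult.commute)


lemma filter_all: "(\<forall>x\<in>#M. P x) \<Longrightarrow> filter_mset P M = M"
  by (induction M) auto
lemma filter_none: "(\<forall>x\<in>#M. \<not> P x) \<Longrightarrow> filter_mset P M = {#}"
  by (induction M) auto

lemma fmmu_formula:
  assumes m1: "m \<ge> 1" and mu1: "\<mu> \<ge> 1" and le: "\<mu>*m \<le> n"
  shows "f_m_mu n m \<mu> = ((rt m - 1 + \<mu>) choose \<mu>) * f_le_m (n - \<mu>*m) (m-1)"
proof -
  define A where "A = multisets_of_size {t. tsize t = m} \<mu>"
  define B where "B = {G. fsize G = n - \<mu>*m \<and> mF G \<le> m - 1}"
  define S where "S = {F. fsize F = n \<and> mF F = m \<and> muF F = \<mu>}"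
  define g where "g = (\<lambda>(X::forest,G::forest). X + G)"
  have S_alt: "S = {F. fsize F = n \<and> (\<forall>t\<in>#F. tsize t \<le> m) \<and> size (filter_mset (\<lambda>t. tsize t = m) F) = \<mu>}"
    using mF_mu_iff[OF m1 mu1] unfolding S_def by blast
  have Aiff: "X \<in> A \<longleftrightarrow> (\<forall>t\<in>#X. tsize t = m) \<and> size X = \<mu>" for X
    by (auto simp: A_def multisets_of_size_def)
  have Biff: "G \<in> B \<longleftrightarrow> fsize G = n - \<mu>*m \<and> (\<forall>t\<in>#G. tsize t < m)" for G
  proof -
    have "tsize t \<le> m - 1 \<longleftrightarrow> tsize t < m" for t using m1 by linarith
    thus ?thesis by (simp add: B_def mF_le_iff)
  qed
  have key: "filter_mset (\<lambda>t. tsize t = m) (X + G) = X" if "X \<in> A" "G \<in> B" for X G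
  proof -
    have "\<forall>t\<in>#G. \<not> tsize t = m" using that by (auto simp: Biff)
    thus ?thesis using that by (simp add: Aiff filter_all filter_none)
  qed
  have key2: "filter_mset (\<lambda>t. tsize t \<noteq> m) (X + G) = G" if "X \<in> A" "G \<in> B" for X G
  proof -
    have "\<forall>t\<in>#G. tsize t \<noteq> m" using that by (auto simp: Biff)
    thus ?thesis using that by (simp add: Aiff filter_all filter_none)
  qed
  have inj: "inj_on g (A \<times> B)"
  proof (rule inj_onI)
    fix p q assume p: "p \<in> A \<times> B" and q: "q \<in> A \<times> B" and e: "g p = g q"
    obtain X G where pp: "p = (X,G)" by (cases p)
    obtain X' G' where qq: "q = (X',G')" by (cases q)
    have "X + G = X' + G'" using e pp qq g_def by simp
    hence "X = X'" "G = G'" using key[of X G] key[of X' G'] key2[of X G] key2[of X' G'] p q pp qq by auto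
    thus "p = q" using pp qq by simp
  qed
  have img: "g ` (A \<times> B) = S"
  proof (intro set_eqI iffI)
    fix F assume "F \<in> g ` (A \<times> B)"
    then obtain X G where XG: "X \<in> A" "G \<in> B" "F = X + G" by (auto simp: g_def)
    have "fsize X = \<mu> * m" using XG(1) fsize_const[of X m] by (simp add: Aiff)
    hence "fsize F = n" using XG le by (simp add: Biff)
    moreover have "\<forall>t\<in>#F. tsize t \<le> m" using XG by (auto simp: Aiff Biff less_imp_le)
    moreover have "size (filter_mset (\<lambda>t. tsize t = m) F) = \<mu>" using key[OF XG(1,2)] XG by (simp add: Aiff)
    ultimately show "F \<in> S" by (simp add: S_alt)
  next
    fix F assume "F \<in> S"
    hence F: "fsize F = n" "\<forall>t\<in>#F. tsize t \<le> m" "size (filter_mset (\<lambda>t. tsize t = m) F) = \<mu>"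
      by (auto simp: S_alt)
    define X where "X = filter_mset (\<lambda>t. tsize t = m) F"
    define G where "G = filter_mset (\<lambda>t. tsize t \<noteq> m) F"
    have FXG: "F = X + G" unfolding X_def G_def by (rule multiset_partition)
    have XA: "X \<in> A" using F by (auto simp: Aiff X_def)
    have "fsize X = \<mu> * m" using XA fsize_const[of X m] by (simp add: Aiff)
    hence "fsize G = n - \<mu>*m" using F(1) FXG by simp
    moreover have "\<forall>t\<in>#G. tsize t < m" using F(2) by (auto simp: G_def order_le_neq_trans)
    ultimately have "G \<in> B" by (simp add: Biff)
    thus "F \<in> g ` (A \<times> B)" using XA FXG by (auto simp: g_def)
  qed
  have "card S = card A * card B"
    using card_image[OF inj] img by (simp add: card_cartesian_product)
  moreover have "card A = (rt m + \<mu> - 1) choose \<mu>"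
    unfolding A_def rt_def by (rule card_multisets_of_size[OF fin_teq])
  moreover have "rt m + \<mu> - 1 = rt m - 1 + \<mu>" using rt_pos[OF m1] by simp
  ultimately show ?thesis unfolding f_m_mu_def f_le_m_def S_def B_def by simp
qed

lemma flemu_sum:
  assumes m1: "m \<ge> 1"
  shows "f_le_m_mu n m \<mu> = (\<Sum>j=1..\<mu>. f_m_mu n m j)"
proof -
  have "{F. fsize F = n \<and> mF F = m \<and> muF F \<le> \<mu>} = (\<Union>j\<in>{1..\<mu>}. {F. fsize F = n \<and> mF F = m \<and> muF F = j})"
    using muF_pos[OF _ m1] by auto
  moreover have "card (\<Union>j\<in>{1..\<mu>}. {F. fsize F = n \<and> mF F = m \<and> muF F = j}) = (\<Sum>j=1..\<mu>. card {F. fsize F = n \<and> mF F = m \<and> muF F = j})"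
    by (rule card_UN_disjoint) (auto intro: fin_eq)
  ultimately show ?thesis unfolding f_le_m_mu_def f_m_mu_def by simp
qed

lemma muF_bound: "fsize F = n \<Longrightarrow> mF F = m \<Longrightarrow> m \<ge> 1 \<Longrightarrow> muF F \<le> n div m"
  using muF_le[of F] by (simp add: less_eq_div_iff_mult_less_eq)

lemma fle_step:
  assumes m1: "m \<ge> 1"
  shows "f_le_m n m = f_le_m n (m-1) + f_le_m_mu n m (n div m)"
proof -
  have "{F. fsize F = n \<and> mF F \<le> m} = {F. fsize F = n \<and> mF F \<le> m - 1} \<union> {F. fsize F = n \<and> mF F = m \<and> muF F \<le> n div m}"
    using muF_bound m1 by auto
  moreover have "card ({F. fsize F = n \<and> mF F \<le> m - 1} \<union> {F. fsize F = n \<and> mF F = m \<and> muF F \<le> n div m})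
     = card {F. fsize F = n \<and> mF F \<le> m - 1} + card {F. fsize F = n \<and> mF F = m \<and> muF F \<le> n div m}"
    by (rule card_Un_disjoint) (use m1 in \<open>auto intro: fin_eq\<close>)
  ultimately show ?thesis unfolding f_le_m_def f_le_m_mu_def by simp
qed

lemma fm_eq:
  assumes m1: "m \<ge> 1"
  shows "f_m n m = f_le_m_mu n m (n div m)"
proof -
  have "{F. fsize F = n \<and> mF F = m} = {F. fsize F = n \<and> mF F = m \<and> muF F \<le> n div m}"
    using muF_bound m1 by auto
  thus ?thesis unfolding f_m_def f_le_m_mu_def by simp
qed


lemma exec_0[simp]: "exec P 0 s = s" by (simp add: exec_def)
lemma exec_Suc: "exec P (Suc k) s = exec P k (step P s)"
  by (simp add: exec_def funpow_Suc_right del: funpow.simps)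
lemma exec_num: "exec P (numeral n) s = exec P (pred_numeral n) (step P s)"
  by (simp add: numeral_eq_Suc exec_Suc)

definition Prog :: prog where
  "Prog = [(LoadConst 1 1),
    (Add 11 0 1),
    (Mul 12 11 11),
    (LoadConst 13 8),
    (LoadConst 9 16),
    (StoreInd 9 1),
    (LoadConst 2 1),
    (Sub 10 0 2),
    (Add 10 10 1),
    (JumpPos 10 11),
    (Jump 85),
    (Sub 15 2 1),
    (Mul 9 15 12),
    (Mul 10 15 11),
    (Add 9 9 10),
    (Mul 9 9 13),
    (LoadConst 10 16),
    (Add 9 9 10),
    (LoadInd 5 9),
    (Sub 5 5 1),
    (LoadConst 3 0),
    (Sub 10 0 3),
    (Add 10 10 1),
    (JumpPos 10 25),
    (Jump 83),
    (LoadConst 7 0),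
    (LoadConst 6 1),
    (LoadConst 4 1),
    (Mul 10 4 2),
    (Sub 14 3 10),
    (Add 10 14 1),
    (JumpPos 10 33),
    (Jump 65),
    (Add 10 5 4),
    (Mul 6 6 10),
    (Div 6 6 4),
    (Mul 9 2 11),
    (Add 9 9 4),
    (Mul 9 9 13),
    (LoadConst 10 19),
    (Add 9 9 10),
    (StoreInd 9 6),
    (Sub 15 2 1),
    (Mul 9 14 12),
    (Mul 10 15 11),
    (Add 9 9 10),
    (Mul 9 9 13),
    (LoadConst 10 16),
    (Add 9 9 10),
    (LoadInd 8 9),
    (Mul 8 6 8),
    (Mul 9 3 12),
    (Mul 10 2 11),
    (Add 9 9 10),
    (Add 9 9 4),
    (Mul 9 9 13),
    (LoadConst 10 17),
    (Add 9 9 10),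
    (StoreInd 9 8),
    (Add 7 7 8),
    (LoadConst 10 1),
    (Add 9 9 10),
    (StoreInd 9 7),
    (Add 4 4 1),
    (Jump 28),
    (Sub 15 2 1),
    (Mul 9 3 12),
    (Mul 10 15 11),
    (Add 9 9 10),
    (Mul 9 9 13),
    (LoadConst 10 16),
    (Add 9 9 10),
    (LoadInd 8 9),
    (Add 8 8 7),
    (Mul 9 3 12),
    (Mul 10 2 11),
    (Add 9 9 10),
    (Mul 9 9 13),
    (LoadConst 10 16),
    (Add 9 9 10),
    (StoreInd 9 8),
    (Add 3 3 1),
    (Jump 21),
    (Add 2 2 1),
    (Jump 7),
    Halt]"

lemma Prog_nth:
  "Prog ! 0 = LoadConst 1 1"
  "Prog ! 1 = Add 11 0 1"
  "Prog ! 2 = Mul 12 11 11"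
  "Prog ! 3 = LoadConst 13 8"
  "Prog ! 4 = LoadConst 9 16"
  "Prog ! 5 = StoreInd 9 1"
  "Prog ! 6 = LoadConst 2 1"
  "Prog ! 7 = Sub 10 0 2"
  "Prog ! 8 = Add 10 10 1"
  "Prog ! 9 = JumpPos 10 11"
  "Prog ! 10 = Jump 85"
  "Prog ! 11 = Sub 15 2 1"
  "Prog ! 12 = Mul 9 15 12"
  "Prog ! 13 = Mul 10 15 11"
  "Prog ! 14 = Add 9 9 10"
  "Prog ! 15 = Mul 9 9 13"
  "Prog ! 16 = LoadConst 10 16"
  "Prog ! 17 = Add 9 9 10"
  "Prog ! 18 = LoadInd 5 9"
  "Prog ! 19 = Sub 5 5 1"
  "Prog ! 20 = LoadConst 3 0"
  "Prog ! 21 = Sub 10 0 3"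
  "Prog ! 22 = Add 10 10 1"
  "Prog ! 23 = JumpPos 10 25"
  "Prog ! 24 = Jump 83"
  "Prog ! 25 = LoadConst 7 0"
  "Prog ! 26 = LoadConst 6 1"
  "Prog ! 27 = LoadConst 4 1"
  "Prog ! 28 = Mul 10 4 2"
  "Prog ! 29 = Sub 14 3 10"
  "Prog ! 30 = Add 10 14 1"
  "Prog ! 31 = JumpPos 10 33"
  "Prog ! 32 = Jump 65"
  "Prog ! 33 = Add 10 5 4"
  "Prog ! 34 = Mul 6 6 10"
  "Prog ! 35 = Div 6 6 4"
  "Prog ! 36 = Mul 9 2 11"
  "Prog ! 37 = Add 9 9 4"
  "Prog ! 38 = Mul 9 9 13"
  "Prog ! 39 = LoadConst 10 19"
  "Prog ! 40 = Add 9 9 10"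
  "Prog ! 41 = StoreInd 9 6"
  "Prog ! 42 = Sub 15 2 1"
  "Prog ! 43 = Mul 9 14 12"
  "Prog ! 44 = Mul 10 15 11"
  "Prog ! 45 = Add 9 9 10"
  "Prog ! 46 = Mul 9 9 13"
  "Prog ! 47 = LoadConst 10 16"
  "Prog ! 48 = Add 9 9 10"
  "Prog ! 49 = LoadInd 8 9"
  "Prog ! 50 = Mul 8 6 8"
  "Prog ! 51 = Mul 9 3 12"
  "Prog ! 52 = Mul 10 2 11"
  "Prog ! 53 = Add 9 9 10"
  "Prog ! 54 = Add 9 9 4"
  "Prog ! 55 = Mul 9 9 13"
  "Prog ! 56 = LoadConst 10 17"
  "Prog ! 57 = Add 9 9 10"
  "Prog ! 58 = StoreInd 9 8"
  "Prog ! 59 = Add 7 7 8"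
  "Prog ! 60 = LoadConst 10 1"
  "Prog ! 61 = Add 9 9 10"
  "Prog ! 62 = StoreInd 9 7"
  "Prog ! 63 = Add 4 4 1"
  "Prog ! 64 = Jump 28"
  "Prog ! 65 = Sub 15 2 1"
  "Prog ! 66 = Mul 9 3 12"
  "Prog ! 67 = Mul 10 15 11"
  "Prog ! 68 = Add 9 9 10"
  "Prog ! 69 = Mul 9 9 13"
  "Prog ! 70 = LoadConst 10 16"
  "Prog ! 71 = Add 9 9 10"
  "Prog ! 72 = LoadInd 8 9"
  "Prog ! 73 = Add 8 8 7"
  "Prog ! 74 = Mul 9 3 12"
  "Prog ! 75 = Mul 10 2 11"
  "Prog ! 76 = Add 9 9 10"
  "Prog ! 77 = Mul 9 9 13"
  "Prog ! 78 = LoadConst 10 16"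
  "Prog ! 79 = Add 9 9 10"
  "Prog ! 80 = StoreInd 9 8"
  "Prog ! 81 = Add 3 3 1"
  "Prog ! 82 = Jump 21"
  "Prog ! 83 = Add 2 2 1"
  "Prog ! 84 = Jump 7"
  "Prog ! 85 = Halt"
  by (simp_all add: Prog_def)
lemma Prog_len: "length Prog = 86" by (simp add: Prog_def)

definition Ad :: "nat \<Rightarrow> nat \<Rightarrow> nat" where "Ad x t = 16 + t + 8*x"
definition cd :: "nat \<Rightarrow> nat \<Rightarrow> nat \<Rightarrow> nat \<Rightarrow> nat" where "cd K a b c = a*(K*K) + b*K + c"

lemma Ad_reg[simp]: "r < 16 \<Longrightarrow> (Ad x t = r) = False" "r < 16 \<Longrightarrow> (r = Ad x t) = False"
  by (auto simp: Ad_def)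
lemma Ad_inj[simp]: "t < 8 \<Longrightarrow> t' < 8 \<Longrightarrow> (Ad x t = Ad y t') = (x = y \<and> t = t')"
  unfolding Ad_def by presburger


lemma exec_add: "exec P (a + b) s = exec P b (exec P a s)"
  by (simp add: exec_def funpow_add add.commute[of a b])

definition acc_set :: "prog \<Rightarrow> nat \<Rightarrow> state \<Rightarrow> nat set" where
  "acc_set P k s = (\<Union>i<k. accessed P (exec P i s))"

lemma acc_0[simp]: "acc_set P 0 s = {}" by (simp add: acc_set_def)
lemma acc_Suc: "acc_set P (Suc k) s = accessed P s \<union> acc_set P k (step P s)"
  unfolding acc_set_def lessThan_Suc_eq_insert_0 by (simp add: exec_Suc)
lemma acc_add: "acc_set P (a + b) s = acc_set P a s \<union> acc_set P b (exec P a s)"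
  by (induction a arbitrary: s) (auto simp: acc_Suc exec_Suc)

definition runs :: "prog \<Rightarrow> nat set \<Rightarrow> state \<Rightarrow> nat \<Rightarrow> state \<Rightarrow> bool" where
  "runs P C s t s' \<longleftrightarrow> (\<exists>k\<le>t. exec P k s = s' \<and> acc_set P k s \<subseteq> C)"

lemma runs_trans: "runs P C s t1 s1 \<Longrightarrow> runs P C s1 t2 s2 \<Longrightarrow> runs P C s (t1 + t2) s2"
  unfolding runs_def
proof (elim exE conjE)
  fix k1 k2 assume "k1 \<le> t1" "exec P k1 s = s1" "acc_set P k1 s \<subseteq> C" "k2 \<le> t2" "exec P k2 s1 = s2" "acc_set P k2 s1 \<subseteq> C"
  thus "\<exists>k\<le>t1 + t2. exec P k s = s2 \<and> acc_set P k s \<subseteq> C"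
    by (intro exI[of _ "k1 + k2"]) (auto simp: exec_add acc_add)
qed

lemma runs_mono: "runs P C s t s' \<Longrightarrow> t \<le> t' \<Longrightarrow> runs P C s t' s'"
  unfolding runs_def by (metis le_trans)

lemma runs_0: "runs P C s 0 s" unfolding runs_def by auto

definition xr :: "prog \<Rightarrow> nat set \<Rightarrow> nat \<Rightarrow> state \<Rightarrow> state option" where
  "xr P C k s = (if acc_set P k s \<subseteq> C then Some (exec P k s) else None)"

lemma xr_0: "xr P C 0 s = Some s" by (simp add: xr_def)
lemma xr_Suc: "xr P C (Suc k) s = (if accessed P s \<subseteq> C then xr P C k (step P s) else None)"
  by (simp add: xr_def acc_Suc exec_Suc)
lemma xr_num: "xr P C (numeral n) s = (if accessed P s \<subseteq> C then xr P C (pred_numeral n) (step P s) else None)"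
  by (simp add: numeral_eq_Suc xr_Suc)
lemma xr_runs: "xr P C k s = Some s' \<Longrightarrow> runs P C s k s'"
  unfolding xr_def runs_def by (auto split: if_splits)

lemma Prog_nth1: "Prog ! Suc 0 = Add 11 0 1" using Prog_nth(2) by simp

lemma Suc2: "Suc (Suc 0) = 2" by simp

lemmas xsimps = Suc2 Prog_nth1 xr_num xr_Suc xr_0 step_def accessed_def halted_def Prog_nth Prog_len

lemma mu_body_syn:
  assumes h: "M 1 = 1" "M 13 = 8" "M 11 = int K" "M 12 = int (K*K)" "M 2 = int m" "M 3 = int n" "M 4 = int \<mu>"
     "M 14 = int j" "m \<ge> 1"
  and c: "\<And>r. r < 16 \<Longrightarrow> r \<in> C" "Ad (cd K 0 m \<mu>) 3 \<in> C" "Ad (cd K j (m-1) 0) 0 \<in> C"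
     "Ad (cd K n m \<mu>) 1 \<in> C" "Ad (cd K n m \<mu>) 2 \<in> C"
  shows "\<exists>M'. runs Prog C (33, M) 32 (28, M') \<and>
     (\<forall>x. x \<notin> {4,6,7,8,9,10,15, Ad (cd K 0 m \<mu>) 3, Ad (cd K n m \<mu>) 1, Ad (cd K n m \<mu>) 2} \<longrightarrow> M' x = M x) \<and>
     M' 4 = M 4 + M 1 \<and> M' 6 = M 6 * (M 5 + M 4) div M 4 \<and>
     M' 7 = M 7 + M 6 * (M 5 + M 4) div M 4 * M (Ad (cd K j (m-1) 0) 0) \<and>
     M' (Ad (cd K 0 m \<mu>) 3) = M 6 * (M 5 + M 4) div M 4 \<and>
     M' (Ad (cd K n m \<mu>) 1) = M 6 * (M 5 + M 4) div M 4 * M (Ad (cd K j (m-1) 0) 0) \<and>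
     M' (Ad (cd K n m \<mu>) 2) = M 7 + M 6 * (M 5 + M 4) div M 4 * M (Ad (cd K j (m-1) 0) 0)"
proof -
  have a1: "nat ((M 2 * M 11 + M 4) * M 13 + 19) = Ad (cd K 0 m \<mu>) 3"
    using h by (simp add: Ad_def cd_def nat_add_distrib nat_mult_distrib)
  have a2: "nat ((M 14 * M 12 + (M 2 - M (Suc 0)) * M 11) * M 13 + 16) = Ad (cd K j (m-1) 0) 0"
  proof -
    have hm: "M 2 - M (Suc 0) = int (m - 1)" using h by simp
    have hm2: "nat (int m - 1) = m - 1" by arith
    show ?thesis unfolding hm using h hm2 by (simp add: Ad_def cd_def nat_add_distrib nat_mult_distrib)
  qed
  have a3: "nat ((M 3 * M 12 + M 2 * M 11 + M 4) * M 13 + 17) = Ad (cd K n m \<mu>) 1"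
    using h by (simp add: Ad_def cd_def nat_add_distrib nat_mult_distrib)
  have a4: "nat (18 + (M 3 * M 12 + M 2 * M 11 + M 4) * M 13) = Ad (cd K n m \<mu>) 2"
    using h by (simp add: Ad_def cd_def nat_add_distrib nat_mult_distrib)
  define r where "r = xr Prog C 32 (33, M)"
  have "r \<noteq> None \<and> fst (the r) = 28 \<and>
     (\<forall>x. x \<notin> {4,6,7,8,9,10,15, Ad (cd K 0 m \<mu>) 3, Ad (cd K n m \<mu>) 1, Ad (cd K n m \<mu>) 2} \<longrightarrow> snd (the r) x = M x) \<and>
     snd (the r) 4 = M 4 + M 1 \<and> snd (the r) 6 = M 6 * (M 5 + M 4) div M 4 \<and>
     snd (the r) 7 = M 7 + M 6 * (M 5 + M 4) div M 4 * M (Ad (cd K j (m-1) 0) 0) \<and>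
     snd (the r) (Ad (cd K 0 m \<mu>) 3) = M 6 * (M 5 + M 4) div M 4 \<and>
     snd (the r) (Ad (cd K n m \<mu>) 1) = M 6 * (M 5 + M 4) div M 4 * M (Ad (cd K j (m-1) 0) 0) \<and>
     snd (the r) (Ad (cd K n m \<mu>) 2) = M 7 + M 6 * (M 5 + M 4) div M 4 * M (Ad (cd K j (m-1) 0) 0)"
    unfolding r_def using c by (simp add: xsimps a1 a2 a3 a4)
  then show ?thesis
    by (intro exI[of _ "snd (the r)"]) (auto intro!: xr_runs simp: r_def)
qed


lemma setup_syn:
  assumes c: "\<And>r. r < 16 \<Longrightarrow> r \<in> C" "16 \<in> C"
  shows "\<exists>M'. runs Prog C (0, (\<lambda>_. 0)(0 := int N)) 7 (7, M') \<and>
     M' 0 = int N \<and> M' 1 = 1 \<and> M' 11 = int N + 1 \<and> M' 12 = (int N + 1) * (int N + 1) \<and>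
     M' 13 = 8 \<and> M' 2 = 1 \<and> M' 16 = 1 \<and> (\<forall>x. x \<notin> {0,1,2,9,11,12,13,16} \<longrightarrow> M' x = 0)"
proof -
  define r where "r = xr Prog C 7 (0, (\<lambda>_. 0)(0 := int N))"
  have "r \<noteq> None \<and> fst (the r) = 7 \<and> snd (the r) 0 = int N \<and> snd (the r) 1 = 1 \<and> snd (the r) 11 = int N + 1 \<and>
     snd (the r) 12 = (int N + 1) * (int N + 1) \<and>
     snd (the r) 13 = 8 \<and> snd (the r) 2 = 1 \<and> snd (the r) 16 = 1 \<and> (\<forall>x. x \<notin> {0,1,2,9,11,12,13,16} \<longrightarrow> snd (the r) x = 0)"
    unfolding r_def using c by (simp add: xsimps)
  then show ?thesis
    by (intro exI[of _ "snd (the r)"]) (auto intro!: xr_runs simp: r_def)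
qed

lemma otest_t:
  assumes "0 < M 0 - M 2 + M 1" "\<And>r. r < 16 \<Longrightarrow> r \<in> C"
  shows "\<exists>M'. runs Prog C (7, M) 3 (11, M') \<and> (\<forall>x. x \<noteq> 10 \<longrightarrow> M' x = M x)"
proof -
  define r where "r = xr Prog C 3 (7, M)"
  have "r \<noteq> None \<and> fst (the r) = 11 \<and> (\<forall>x. x \<noteq> 10 \<longrightarrow> snd (the r) x = M x)"
    unfolding r_def using assms by (simp add: xsimps)
  then show ?thesis
    by (intro exI[of _ "snd (the r)"]) (auto intro!: xr_runs simp: r_def)
qed

lemma otest_f:
  assumes "\<not> 0 < M 0 - M 2 + M 1" "\<And>r. r < 16 \<Longrightarrow> r \<in> C"
  shows "\<exists>M'. runs Prog C (7, M) 4 (85, M') \<and> (\<forall>x. x \<noteq> 10 \<longrightarrow> M' x = M x)"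
proof -
  define r where "r = xr Prog C 4 (7, M)"
  have "r \<noteq> None \<and> fst (the r) = 85 \<and> (\<forall>x. x \<noteq> 10 \<longrightarrow> snd (the r) x = M x)"
    unfolding r_def using assms by (simp add: xsimps)
  then show ?thesis
    by (intro exI[of _ "snd (the r)"]) (auto intro!: xr_runs simp: r_def)
qed

lemma obody_syn:
  assumes h: "M 1 = 1" "M 13 = 8" "M 11 = int K" "M 12 = int (K*K)" "M 2 = int m" "m \<ge> 1"
  and c: "\<And>r. r < 16 \<Longrightarrow> r \<in> C" "Ad (cd K (m-1) (m-1) 0) 0 \<in> C"
  shows "\<exists>M'. runs Prog C (11, M) 10 (21, M') \<and>
     (\<forall>x. x \<notin> {3,5,9,10,15} \<longrightarrow> M' x = M x) \<and>
     M' 5 = M (Ad (cd K (m-1) (m-1) 0) 0) - M 1 \<and> M' 3 = 0"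
proof -
  have hm: "M 2 - M (Suc 0) = int (m - 1)" using h by simp
  have hm2: "nat (int m - 1) = m - 1" by arith
  have a1: "nat (((M 2 - M (Suc 0)) * M 12 + (M 2 - M (Suc 0)) * M 11) * M 13 + 16) = Ad (cd K (m-1) (m-1) 0) 0"
    unfolding hm using h hm2 by (simp add: Ad_def cd_def nat_add_distrib nat_mult_distrib)
  define r where "r = xr Prog C 10 (11, M)"
  have "r \<noteq> None \<and> fst (the r) = 21 \<and>
     (\<forall>x. x \<notin> {3,5,9,10,15} \<longrightarrow> snd (the r) x = M x) \<and>
     snd (the r) 5 = M (Ad (cd K (m-1) (m-1) 0) 0) - M 1 \<and> snd (the r) 3 = 0"
    unfolding r_def using c by (simp add: xsimps a1)
  then show ?thesis
    by (intro exI[of _ "snd (the r)"]) (auto intro!: xr_runs simp: r_def)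
qed

lemma ntest_t:
  assumes "0 < M 0 - M 3 + M 1" "\<And>r. r < 16 \<Longrightarrow> r \<in> C"
  shows "\<exists>M'. runs Prog C (21, M) 3 (25, M') \<and> (\<forall>x. x \<noteq> 10 \<longrightarrow> M' x = M x)"
proof -
  define r where "r = xr Prog C 3 (21, M)"
  have "r \<noteq> None \<and> fst (the r) = 25 \<and> (\<forall>x. x \<noteq> 10 \<longrightarrow> snd (the r) x = M x)"
    unfolding r_def using assms by (simp add: xsimps)
  then show ?thesis
    by (intro exI[of _ "snd (the r)"]) (auto intro!: xr_runs simp: r_def)
qed

lemma ntest_f:
  assumes "\<not> 0 < M 0 - M 3 + M 1" "\<And>r. r < 16 \<Longrightarrow> r \<in> C"
  shows "\<exists>M'. runs Prog C (21, M) 4 (83, M') \<and> (\<forall>x. x \<noteq> 10 \<longrightarrow> M' x = M x)"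
proof -
  define r where "r = xr Prog C 4 (21, M)"
  have "r \<noteq> None \<and> fst (the r) = 83 \<and> (\<forall>x. x \<noteq> 10 \<longrightarrow> snd (the r) x = M x)"
    unfolding r_def using assms by (simp add: xsimps)
  then show ?thesis
    by (intro exI[of _ "snd (the r)"]) (auto intro!: xr_runs simp: r_def)
qed

lemma nbody_syn:
  assumes "\<And>r. r < 16 \<Longrightarrow> r \<in> C"
  shows "\<exists>M'. runs Prog C (25, M) 3 (28, M') \<and> (\<forall>x. x \<notin> {4,6,7} \<longrightarrow> M' x = M x) \<and>
     M' 4 = 1 \<and> M' 6 = 1 \<and> M' 7 = 0"
proof -
  define r where "r = xr Prog C 3 (25, M)"
  have "r \<noteq> None \<and> fst (the r) = 28 \<and> (\<forall>x. x \<notin> {4,6,7} \<longrightarrow> snd (the r) x = M x) \<and>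
     snd (the r) 4 = 1 \<and> snd (the r) 6 = 1 \<and> snd (the r) 7 = 0"
    unfolding r_def using assms by (simp add: xsimps)
  then show ?thesis
    by (intro exI[of _ "snd (the r)"]) (auto intro!: xr_runs simp: r_def)
qed

lemma mtest_t:
  assumes "0 < M 3 - M 4 * M 2 + M 1" "\<And>r. r < 16 \<Longrightarrow> r \<in> C"
  shows "\<exists>M'. runs Prog C (28, M) 4 (33, M') \<and> (\<forall>x. x \<notin> {10,14} \<longrightarrow> M' x = M x) \<and>
     M' 14 = M 3 - M 4 * M 2"
proof -
  define r where "r = xr Prog C 4 (28, M)"
  have "r \<noteq> None \<and> fst (the r) = 33 \<and> (\<forall>x. x \<notin> {10,14} \<longrightarrow> snd (the r) x = M x) \<and>
     snd (the r) 14 = M 3 - M 4 * M 2"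
    unfolding r_def using assms by (simp add: xsimps)
  then show ?thesis
    by (intro exI[of _ "snd (the r)"]) (auto intro!: xr_runs simp: r_def)
qed

lemma mtest_f:
  assumes "\<not> 0 < M 3 - M 4 * M 2 + M 1" "\<And>r. r < 16 \<Longrightarrow> r \<in> C"
  shows "\<exists>M'. runs Prog C (28, M) 5 (65, M') \<and> (\<forall>x. x \<notin> {10,14} \<longrightarrow> M' x = M x)"
proof -
  define r where "r = xr Prog C 5 (28, M)"
  have "r \<noteq> None \<and> fst (the r) = 65 \<and> (\<forall>x. x \<notin> {10,14} \<longrightarrow> snd (the r) x = M x)"
    unfolding r_def using assms by (simp add: xsimps)
  then show ?thesis
    by (intro exI[of _ "snd (the r)"]) (auto intro!: xr_runs simp: r_def)
qed

lemma after_syn: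
  assumes h: "M 1 = 1" "M 13 = 8" "M 11 = int K" "M 12 = int (K*K)" "M 2 = int m" "M 3 = int n" "m \<ge> 1"
  and c: "\<And>r. r < 16 \<Longrightarrow> r \<in> C" "Ad (cd K n (m-1) 0) 0 \<in> C" "Ad (cd K n m 0) 0 \<in> C"
  shows "\<exists>M'. runs Prog C (65, M) 18 (21, M') \<and>
     (\<forall>x. x \<notin> {3,8,9,10,15, Ad (cd K n m 0) 0} \<longrightarrow> M' x = M x) \<and>
     M' (Ad (cd K n m 0) 0) = M (Ad (cd K n (m-1) 0) 0) + M 7 \<and> M' 3 = M 3 + M 1"
proof -
  have hm: "M 2 - M (Suc 0) = int (m - 1)" using h by simp
  have hm2: "nat (int m - 1) = m - 1" by arith
  have a1: "nat ((M 3 * M 12 + (M 2 - M (Suc 0)) * M 11) * M 13 + 16) = Ad (cd K n (m-1) 0) 0"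
    unfolding hm using h hm2 by (simp add: Ad_def cd_def nat_add_distrib nat_mult_distrib)
  have a2: "nat ((M 3 * M 12 + M 2 * M 11) * M 13 + 16) = Ad (cd K n m 0) 0"
    using h by (simp add: Ad_def cd_def nat_add_distrib nat_mult_distrib)
  define r where "r = xr Prog C 18 (65, M)"
  have "r \<noteq> None \<and> fst (the r) = 21 \<and>
     (\<forall>x. x \<notin> {3,8,9,10,15, Ad (cd K n m 0) 0} \<longrightarrow> snd (the r) x = M x) \<and>
     snd (the r) (Ad (cd K n m 0) 0) = M (Ad (cd K n (m-1) 0) 0) + M 7 \<and> snd (the r) 3 = M 3 + M 1"
    unfolding r_def using c by (simp add: xsimps a1 a2)
  then show ?thesis
    by (intro exI[of _ "snd (the r)"]) (auto intro!: xr_runs simp: r_def)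
qed

lemma nextm_syn:
  assumes "\<And>r. r < 16 \<Longrightarrow> r \<in> C"
  shows "\<exists>M'. runs Prog C (83, M) 2 (7, M') \<and> (\<forall>x. x \<noteq> 2 \<longrightarrow> M' x = M x) \<and> M' 2 = M 2 + M 1"
proof -
  define r where "r = xr Prog C 2 (83, M)"
  have "r \<noteq> None \<and> fst (the r) = 7 \<and> (\<forall>x. x \<noteq> 2 \<longrightarrow> snd (the r) x = M x) \<and> snd (the r) 2 = M 2 + M 1"
    unfolding r_def using assms by (simp add: xsimps)
  then show ?thesis
    by (intro exI[of _ "snd (the r)"]) (auto intro!: xr_runs simp: r_def)
qed


definition val :: "nat \<times> nat \<times> nat \<times> nat \<Rightarrow> int" where
  "val k = (case k of (t,a,b,c) \<Rightarrow> if t = 0 then int (f_le_m a b) else if t = 1 then int (f_m_mu a b c)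
     else if t = 2 then int (f_le_m_mu a b c) else int ((rt b - 1 + c) choose c))"

definition Region :: "nat \<Rightarrow> (nat \<times> nat \<times> nat \<times> nat) set" where
  "Region N = {(t,a,b,c). (t = 0 \<and> a \<le> N \<and> b \<le> N \<and> c = 0) \<or> ((t = 1 \<or> t = 2) \<and> 1 \<le> b \<and> 1 \<le> c \<and> c*b \<le> a \<and> a \<le> N)
     \<or> (t = 3 \<and> a = 0 \<and> 1 \<le> b \<and> 1 \<le> c \<and> c*b \<le> N)}"

definition Dn :: "nat \<Rightarrow> nat \<Rightarrow> nat \<Rightarrow> nat \<Rightarrow> (nat \<times> nat \<times> nat \<times> nat) set" where
  "Dn N m n \<mu> = {(t,a,b,c) \<in> Region N. (t = 0 \<longrightarrow> b < m \<or> (b = m \<and> a < n)) \<and>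
     ((t = 1 \<or> t = 2) \<longrightarrow> b < m \<or> (b = m \<and> (a < n \<or> (a = n \<and> c < \<mu>)))) \<and>
     (t = 3 \<longrightarrow> b < m \<or> (b = m \<and> (c*b < n \<or> c < \<mu>)))}"

definition Adk :: "nat \<Rightarrow> nat \<times> nat \<times> nat \<times> nat \<Rightarrow> nat" where
  "Adk N k = (case k of (t,a,b,c) \<Rightarrow> Ad (cd (N+1) a b c) t)"

definition Cells :: "nat \<Rightarrow> nat set" where
  "Cells N = {..<16} \<union> Adk N ` Region N"

definition good :: "nat \<Rightarrow> (nat \<times> nat \<times> nat \<times> nat) set \<Rightarrow> (nat \<Rightarrow> int) \<Rightarrow> bool" where
  "good N D M \<longleftrightarrow> (\<forall>k\<in>D. M (Adk N k) = val k)"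

definition RB :: "nat \<Rightarrow> (nat \<Rightarrow> int) \<Rightarrow> bool" where
  "RB N M \<longleftrightarrow> M 0 = int N \<and> M 1 = 1 \<and> M 11 = int (N+1) \<and> M 12 = int ((N+1)*(N+1)) \<and> M 13 = 8"

lemma region_bound: "(t,a,b,c) \<in> Region N \<Longrightarrow> t < 8 \<and> a \<le> N \<and> b \<le> N \<and> c \<le> N"
proof -
  assume h: "(t,a,b,c) \<in> Region N"
  have aux: "b \<le> x \<and> c \<le> x" if "1 \<le> b" "1 \<le> c" "c*b \<le> x" for x
  proof -
    have "c \<le> c*b" "b \<le> c*b" using that by simp_all
    thus ?thesis using that by linarith
  qed
  show ?thesis using h aux[of a] aux[of N] unfolding Region_def by auto
qed

lemma divmod_inj: "(c::nat) < K \<Longrightarrow> c' < K \<Longrightarrow> x*K + c = x'*K + c' \<Longrightarrow> x = x' \<and> c = c'"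
proof -
  assume h: "c < K" "c' < K" "x*K + c = x'*K + c'"
  have "x = (x*K + c) div K" using h(1) by simp
  also have "\<dots> = (x'*K + c') div K" using h(3) by simp
  also have "\<dots> = x'" using h(2) by simp
  finally have "x = x'" .
  then show ?thesis using h(3) by simp
qed

lemma cd_inj: "b < K \<Longrightarrow> c < K \<Longrightarrow> b' < K \<Longrightarrow> c' < K \<Longrightarrow> cd K a b c = cd K a' b' c' \<Longrightarrow> a = a' \<and> b = b' \<and> c = c'"
proof -
  assume h: "b < K" "c < K" "b' < K" "c' < K" "cd K a b c = cd K a' b' c'"
  have "(a*K + b)*K + c = (a'*K + b')*K + c'" using h(5) by (simp add: cd_def algebra_simps)
  hence "a*K + b = a'*K + b' \<and> c = c'" using divmod_inj h by blast
  thus ?thesis using divmod_inj h by blast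
qed

lemma Adk_inj: "k \<in> Region N \<Longrightarrow> k' \<in> Region N \<Longrightarrow> Adk N k = Adk N k' \<Longrightarrow> k = k'"
proof -
  assume h: "k \<in> Region N" "k' \<in> Region N" "Adk N k = Adk N k'"
  obtain t a b c where k: "k = (t,a,b,c)" by (cases k) auto
  obtain t' a' b' c' where k': "k' = (t',a',b',c')" by (cases k') auto
  have b: "t < 8" "b < N+1" "c < N+1" "t' < 8" "b' < N+1" "c' < N+1"
    using region_bound[of t a b c N] region_bound[of t' a' b' c' N] h k k' by auto
  have "cd (N+1) a b c = cd (N+1) a' b' c' \<and> t = t'" using h(3) b by (simp add: Adk_def k k')
  thus ?thesis using cd_inj[OF b(2,3,5,6)] k k' by auto
qed

lemma Adk_ge: "Adk N k \<ge> 16" by (auto simp: Adk_def Ad_def split: prod.splits)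

lemma cells_reg: "r < 16 \<Longrightarrow> r \<in> Cells N" by (simp add: Cells_def)
lemma cells_key: "k \<in> Region N \<Longrightarrow> Adk N k \<in> Cells N" by (simp add: Cells_def)

lemma good_mono: "D' \<subseteq> D \<Longrightarrow> good N D M \<Longrightarrow> good N D' M" by (auto simp: good_def)

lemma good_frame:
  assumes "good N D M" "D \<subseteq> Region N" "E \<subseteq> Region N"
    "\<forall>x. 16 \<le> x \<longrightarrow> x \<notin> Adk N ` E \<longrightarrow> M' x = M x" "\<forall>k\<in>E. M' (Adk N k) = val k"
  shows "good N (D \<union> E) M'"
  unfolding good_def
proof
  fix k assume k: "k \<in> D \<union> E"
  show "M' (Adk N k) = val k"
  proof (cases "k \<in> E")
    case True thus ?thesis using assms(5) by auto
  next
    case False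
    hence kD: "k \<in> D" using k by auto
    have "Adk N k \<notin> Adk N ` E"
    proof
      assume "Adk N k \<in> Adk N ` E"
      then obtain k' where "k' \<in> E" "Adk N k = Adk N k'" by auto
      hence "k = k'" using Adk_inj[of k N k'] kD assms(2,3) by auto
      thus False using False \<open>k' \<in> E\<close> by simp
    qed
    hence "M' (Adk N k) = M (Adk N k)" using assms(4) Adk_ge by auto
    thus ?thesis using assms(1) kD by (simp add: good_def)
  qed
qed

lemma good_frame_small:
  assumes "good N D M" "\<forall>x. 16 \<le> x \<longrightarrow> M' x = M x"
  shows "good N D M'"
  using assms Adk_ge by (auto simp: good_def)

lemma Dn_sub: "Dn N m n \<mu> \<subseteq> Region N" by (auto simp: Dn_def)

lemma Adk_eq: "Adk N (t,a,b,c) = Ad (cd (N+1) a b c) t" by (simp add: Adk_def)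

definition MuInv where
  "MuInv N m n \<mu> M \<longleftrightarrow> RB N M \<and> M 2 = int m \<and> M 3 = int n \<and> M 4 = int \<mu> \<and> M 5 = int (rt m - 1) \<and>
   M 6 = int ((rt m - 1 + (\<mu> - 1)) choose (\<mu> - 1)) \<and> M 7 = int (\<Sum>j=1..\<mu>-1. f_m_mu n m j) \<and>
   good N (Dn N m n \<mu>) M \<and> 1 \<le> m \<and> m \<le> N \<and> n \<le> N \<and> 1 \<le> \<mu> \<and> (\<mu> - 1) * m \<le> n"

lemma Dn_mu_step:
  assumes "\<mu> * m \<le> n" "1 \<le> \<mu>" "1 \<le> m" "n \<le> N"
  shows "Dn N m n (Suc \<mu>) = Dn N m n \<mu> \<union> {(3,0,m,\<mu>),(1,n,m,\<mu>),(2,n,m,\<mu>)}"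
  using assms unfolding Dn_def Region_def by auto

lemma binom_int:
  assumes "\<mu> \<ge> 1"
  shows "int ((R + (\<mu> - 1)) choose (\<mu> - 1)) * (int R + int \<mu>) div int \<mu> = int ((R + \<mu>) choose \<mu>)"
proof -
  have "((R + \<mu>) choose \<mu>) * \<mu> = ((R + \<mu> - 1) choose (\<mu> - 1)) * (R + \<mu>)" by (rule binom_step[OF assms])
  moreover have "R + \<mu> - 1 = R + (\<mu> - 1)" using assms by simp
  ultimately have "int ((R + (\<mu> - 1)) choose (\<mu> - 1)) * (int R + int \<mu>) = int ((R + \<mu>) choose \<mu>) * int \<mu>"
    by (metis of_nat_add of_nat_mult)
  thus ?thesis using assms by simp
qed

lemma mu_step:
  assumes inv: "MuInv N m n \<mu> M" and le: "\<mu> * m \<le> n"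
  shows "\<exists>M'. runs Prog (Cells N) (28, M) 36 (28, M') \<and> MuInv N m n (Suc \<mu>) M'"
proof -
  note I = inv[unfolded MuInv_def RB_def]
  have hm: "1 \<le> m" "m \<le> N" "n \<le> N" "1 \<le> \<mu>" using I by auto
  have "int (\<mu> * m) \<le> int n" using le by (simp only: of_nat_le_iff)
  hence "0 < int n - int \<mu> * int m + 1" by simp
  hence "0 < M 3 - M 4 * M 2 + M 1" using I by simp
  then obtain M1 where r1: "runs Prog (Cells N) (28, M) 4 (33, M1)" and
    f1: "\<forall>x. x \<notin> {10,14} \<longrightarrow> M1 x = M x" and j1: "M1 14 = M 3 - M 4 * M 2"
    using mtest_t[of M "Cells N"] cells_reg by blast
  define j where "j = n - \<mu> * m"
  have M1r: "M1 1 = 1" "M1 13 = 8" "M1 11 = int (N+1)" "M1 12 = int ((N+1)*(N+1))" "M1 2 = int m" "M1 3 = int n" "M1 4 = int \<mu>"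
    "M1 14 = int j" "M1 0 = int N" "M1 5 = M 5" "M1 6 = M 6" "M1 7 = M 7"
    using f1 I j1 le by (auto simp: j_def of_nat_diff)
  have regj: "(0, j, m - 1, 0) \<in> Region N" using hm by (auto simp: Region_def j_def)
  have reg3: "(3,0,m,\<mu>) \<in> Region N" "(1,n,m,\<mu>) \<in> Region N" "(2,n,m,\<mu>) \<in> Region N"
    using hm le by (auto simp: Region_def)
  obtain M2 where r2: "runs Prog (Cells N) (33, M1) 32 (28, M2)" and
    f2: "\<forall>x. x \<notin> {4,6,7,8,9,10,15, Ad (cd (N+1) 0 m \<mu>) 3, Ad (cd (N+1) n m \<mu>) 1, Ad (cd (N+1) n m \<mu>) 2} \<longrightarrow> M2 x = M1 x" and
    v4: "M2 4 = M1 4 + M1 1" and v6: "M2 6 = M1 6 * (M1 5 + M1 4) div M1 4" and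
    v7: "M2 7 = M1 7 + M1 6 * (M1 5 + M1 4) div M1 4 * M1 (Ad (cd (N+1) j (m-1) 0) 0)" and
    w3: "M2 (Ad (cd (N+1) 0 m \<mu>) 3) = M1 6 * (M1 5 + M1 4) div M1 4" and
    w1: "M2 (Ad (cd (N+1) n m \<mu>) 1) = M1 6 * (M1 5 + M1 4) div M1 4 * M1 (Ad (cd (N+1) j (m-1) 0) 0)" and
    w2: "M2 (Ad (cd (N+1) n m \<mu>) 2) = M1 7 + M1 6 * (M1 5 + M1 4) div M1 4 * M1 (Ad (cd (N+1) j (m-1) 0) 0)"
    using mu_body_syn[of M1 "N+1" m n \<mu> j "Cells N", OF M1r(1-8) hm(1) cells_reg
       cells_key[OF reg3(1), unfolded Adk_eq] cells_key[OF regj, unfolded Adk_eq]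
       cells_key[OF reg3(2), unfolded Adk_eq] cells_key[OF reg3(3), unfolded Adk_eq]] by blast
  have run: "runs Prog (Cells N) (28, M) 36 (28, M2)" using runs_trans[OF r1 r2] by simp
  define R where "R = rt m - 1"
  have jD: "(0, j, m - 1, 0) \<in> Dn N m n \<mu>" using regj hm by (auto simp: Dn_def)
  have Fv: "M1 (Ad (cd (N+1) j (m-1) 0) 0) = int (f_le_m j (m-1))"
  proof -
    have "M (Adk N (0, j, m - 1, 0)) = val (0, j, m - 1, 0)" using I jD by (auto simp: good_def)
    moreover have "Ad (cd (N+1) j (m-1) 0) 0 \<notin> {10,14}" by simp
    ultimately show ?thesis using f1 by (simp add: Adk_eq val_def)
  qed
  have bv: "M1 6 * (M1 5 + M1 4) div M1 4 = int ((R + \<mu>) choose \<mu>)"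
    using M1r I binom_int[OF hm(4), of R] by (simp add: R_def)
  have fmmu: "f_m_mu n m \<mu> = ((R + \<mu>) choose \<mu>) * f_le_m j (m-1)"
    using fmmu_formula[OF hm(1) hm(4) le] by (simp add: R_def j_def)
  have sum_step: "(\<Sum>j=1..\<mu>. f_m_mu n m j) = (\<Sum>j=1..\<mu>-1. f_m_mu n m j) + f_m_mu n m \<mu>"
  proof -
    obtain k where k: "\<mu> = Suc k" using hm(4) by (cases \<mu>) auto
    show ?thesis unfolding k by simp
  qed
  have acc: "M2 7 = int (\<Sum>j=1..\<mu>. f_m_mu n m j)"
    using v7 bv Fv I M1r sum_step fmmu by simp
  have flemu: "f_le_m_mu n m \<mu> = (\<Sum>j=1..\<mu>. f_m_mu n m j)" by (rule flemu_sum[OF hm(1)])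
  define E where "E = {(3::nat,0::nat,m,\<mu>),(1,n,m,\<mu>),(2,n,m,\<mu>)}"
  have ER: "E \<subseteq> Region N" using reg3 by (auto simp: E_def)
  have e3: "M2 (Adk N (3,0,m,\<mu>)) = val (3,0,m,\<mu>)" using w3 bv by (simp add: Adk_eq val_def R_def)
  have e1: "M2 (Adk N (1,n,m,\<mu>)) = val (1,n,m,\<mu>)" using w1 bv Fv fmmu by (simp add: Adk_eq val_def)
  have "M2 (Ad (cd (N+1) n m \<mu>) 2) = M2 7" using w2 v7 by simp
  hence e2: "M2 (Adk N (2,n,m,\<mu>)) = val (2,n,m,\<mu>)" using acc flemu by (simp add: Adk_eq val_def)
  have gE: "\<forall>k\<in>E. M2 (Adk N k) = val k"
    using e1 e2 e3 by (simp add: E_def)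
  have fr: "\<forall>x. 16 \<le> x \<longrightarrow> x \<notin> Adk N ` E \<longrightarrow> M2 x = M x"
    using f1 f2 by (auto simp: E_def Adk_eq)
  have good': "good N (Dn N m n (Suc \<mu>)) M2"
    using good_frame[of N "Dn N m n \<mu>" M E M2] I ER fr gE Dn_sub Dn_mu_step[OF le hm(4,1,3)]
    by (simp add: E_def)
  have R2: "M2 0 = int N \<and> M2 1 = 1 \<and> M2 11 = int (N+1) \<and> M2 12 = int ((N+1)*(N+1)) \<and> M2 13 = 8 \<and>
     M2 2 = int m \<and> M2 3 = int n \<and> M2 5 = int (rt m - 1)" using f1 f2 I by simp
  have R4: "M2 4 = int (Suc \<mu>)" using v4 M1r by simp
  have R6: "M2 6 = int ((rt m - 1 + (Suc \<mu> - 1)) choose (Suc \<mu> - 1))" using v6 bv by (simp add: R_def)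
  have R7: "M2 7 = int (\<Sum>j=1..Suc \<mu> - 1. f_m_mu n m j)" using acc by simp
  have "MuInv N m n (Suc \<mu>) M2"
    unfolding MuInv_def RB_def using R2 R4 R6 R7 good' le hm by simp
  thus ?thesis using run by blast
qed


lemma MuInv_frame:
  assumes "MuInv N m n \<mu> M" "\<forall>x. x \<notin> {10,14} \<longrightarrow> M' x = M x"
  shows "MuInv N m n \<mu> M'"
proof -
  have "good N (Dn N m n \<mu>) M'"
    using good_frame_small[of N "Dn N m n \<mu>" M M'] assms by (auto simp: MuInv_def)
  thus ?thesis using assms by (auto simp: MuInv_def RB_def)
qed

lemma mu_loop:
  "MuInv N m n \<mu> M \<Longrightarrow> \<exists>M'. runs Prog (Cells N) (28, M) (36 * (n div m + 1 - \<mu>) + 5) (65, M') \<and> MuInv N m n (n div m + 1) M'"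
proof (induction "n div m + 1 - \<mu>" arbitrary: \<mu> M)
  case 0
  have hm: "1 \<le> m" "(\<mu> - 1)*m \<le> n" "1 \<le> \<mu>" using 0(2) by (auto simp: MuInv_def)
  have "n div m < \<mu>" using 0(1) by simp
  hence lt: "n < \<mu> * m" using hm by (simp add: div_less_iff_less_mult)
  have "\<mu> - 1 \<le> n div m" using hm by (simp add: less_eq_div_iff_mult_less_eq)
  hence mu: "\<mu> = n div m + 1" using \<open>n div m < \<mu>\<close> by simp
  have "int n < int (\<mu> * m)" using lt by (simp only: of_nat_less_iff)
  hence "\<not> 0 < int n - int \<mu> * int m + 1" by simp
  hence "\<not> 0 < M 3 - M 4 * M 2 + M 1"
    using 0(2) by (simp add: MuInv_def RB_def)
  then obtain M' where r: "runs Prog (Cells N) (28, M) 5 (65, M')" and fr: "\<forall>x. x \<notin> {10,14} \<longrightarrow> M' x = M x"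
    using mtest_f[of M "Cells N"] cells_reg by blast
  have "MuInv N m n (n div m + 1) M'" using MuInv_frame[OF 0(2) fr] mu by simp
  moreover have "36 * (n div m + 1 - \<mu>) + 5 = 5" using 0(1)[symmetric] by simp
  ultimately show ?case using r by metis
next
  case (Suc d)
  have hm: "1 \<le> m" using Suc(3) by (auto simp: MuInv_def)
  have "\<mu> \<le> n div m" using Suc(2) by simp
  hence le: "\<mu> * m \<le> n" using hm by (simp add: less_eq_div_iff_mult_less_eq)
  obtain M1 where r1: "runs Prog (Cells N) (28, M) 36 (28, M1)" and i1: "MuInv N m n (Suc \<mu>) M1"
    using mu_step[OF Suc(3) le] by blast
  have "d = n div m + 1 - Suc \<mu>" using Suc(2) by simp
  then obtain M' where r2: "runs Prog (Cells N) (28, M1) (36 * d + 5) (65, M')" and i2: "MuInv N m n (n div m + 1) M'"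
    using Suc(1)[of "Suc \<mu>" M1] i1 by auto
  have "runs Prog (Cells N) (28, M) (36 + (36 * d + 5)) (65, M')" by (rule runs_trans[OF r1 r2])
  moreover have "36 + (36 * d + 5) = 36 * (n div m + 1 - \<mu>) + 5" using Suc(2)[symmetric] by simp
  ultimately show ?case using i2 by metis
qed


definition NInv where
  "NInv N m n M \<longleftrightarrow> RB N M \<and> M 2 = int m \<and> M 3 = int n \<and> M 5 = int (rt m - 1) \<and> good N (Dn N m n 1) M \<and>
     1 \<le> m \<and> m \<le> N \<and> n \<le> N + 1"

lemma Dn_n_step:
  assumes "1 \<le> m" "m \<le> N" "n \<le> N"
  shows "Dn N m (Suc n) 1 = Dn N m n (n div m + 1) \<union> {(0,n,m,0)}"
proof -
  have hd: "(c < n div m + 1) = (c * m \<le> n)" for c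
    using assms(1) by (simp add: less_Suc_eq_le less_eq_div_iff_mult_less_eq)
  have hs: "(x < Suc n) = (x \<le> n)" for x by auto
  show ?thesis using assms unfolding Dn_def Region_def hd hs by auto
qed

lemma n_step:
  assumes inv: "NInv N m n M" and le: "n \<le> N"
  shows "\<exists>M'. runs Prog (Cells N) (21, M) (29 + 36 * (n div m)) (21, M') \<and> NInv N m (Suc n) M'"
proof -
  note I = inv[unfolded NInv_def RB_def]
  have hm: "1 \<le> m" "m \<le> N" using I by auto
  have "0 < M 0 - M 3 + M 1" using I le by simp
  then obtain M1 where r1: "runs Prog (Cells N) (21, M) 3 (25, M1)" and f1: "\<forall>x. x \<noteq> 10 \<longrightarrow> M1 x = M x"
    using ntest_t[of M "Cells N"] cells_reg by blast
  obtain M2 where r2: "runs Prog (Cells N) (25, M1) 3 (28, M2)" and f2: "\<forall>x. x \<notin> {4,6,7} \<longrightarrow> M2 x = M1 x"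
    and v2: "M2 4 = 1" "M2 6 = 1" "M2 7 = 0"
    using nbody_syn[of "Cells N" M1] cells_reg by blast
  have fr2: "\<forall>x. 16 \<le> x \<longrightarrow> M2 x = M x" using f1 f2 by simp
  have g0: "good N (Dn N m n 1) M" using I by blast
  have g2: "good N (Dn N m n 1) M2" by (rule good_frame_small[OF g0 fr2])
  have R2: "M2 0 = int N \<and> M2 1 = 1 \<and> M2 11 = int (N+1) \<and> M2 12 = int ((N+1)*(N+1)) \<and> M2 13 = 8 \<and>
     M2 2 = int m \<and> M2 3 = int n \<and> M2 5 = int (rt m - 1)" using f1 f2 I by simp
  have "MuInv N m n 1 M2"
    unfolding MuInv_def RB_def using R2 v2 g2 le hm by simp
  then obtain M3 where r3: "runs Prog (Cells N) (28, M2) (36 * (n div m + 1 - 1) + 5) (65, M3)"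
    and i3: "MuInv N m n (n div m + 1) M3"
    using mu_loop by blast
  note I3 = i3[unfolded MuInv_def RB_def]
  have reg: "(0,n,m-1,0) \<in> Region N" "(0,n,m,0) \<in> Region N" using hm le by (auto simp: Region_def)
  obtain M4 where r4: "runs Prog (Cells N) (65, M3) 18 (21, M4)" and
    f4: "\<forall>x. x \<notin> {3,8,9,10,15, Ad (cd (N+1) n m 0) 0} \<longrightarrow> M4 x = M3 x" and
    w4: "M4 (Ad (cd (N+1) n m 0) 0) = M3 (Ad (cd (N+1) n (m-1) 0) 0) + M3 7" and
    v4: "M4 3 = M3 3 + M3 1"
  proof -
    have M3r: "M3 1 = 1" "M3 13 = 8" "M3 11 = int (N+1)" "M3 12 = int ((N+1)*(N+1))" "M3 2 = int m" "M3 3 = int n"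
      using I3 by auto
    show ?thesis
      using after_syn[of M3 "N+1" m n "Cells N", OF M3r hm(1) cells_reg
        cells_key[OF reg(1), unfolded Adk_eq] cells_key[OF reg(2), unfolded Adk_eq]] that by blast
  qed
  have "(0,n,m-1,0) \<in> Dn N m n (n div m + 1)" using reg hm by (auto simp: Dn_def)
  hence Fv: "M3 (Ad (cd (N+1) n (m-1) 0) 0) = int (f_le_m n (m-1))"
    using I3 by (auto simp: good_def Adk_eq val_def)
  have "f_le_m n m = f_le_m n (m-1) + (\<Sum>j=1..n div m. f_m_mu n m j)"
    using fle_step[OF hm(1)] flemu_sum[OF hm(1)] by simp
  hence wv: "M4 (Adk N (0,n,m,0)) = val (0,n,m,0)"
    using w4 Fv I3 by (simp add: Adk_eq val_def)
  have fr: "\<forall>x. 16 \<le> x \<longrightarrow> x \<notin> Adk N ` {(0,n,m,0)} \<longrightarrow> M4 x = M3 x"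
    using f4 by (simp add: Adk_eq)
  have g3: "good N (Dn N m n (n div m + 1)) M3" using I3 by blast
  have "good N (Dn N m n (n div m + 1) \<union> {(0,n,m,0)}) M4"
    by (rule good_frame[OF g3 Dn_sub _ fr]) (use reg(2) wv in simp_all)
  hence g4: "good N (Dn N m (Suc n) 1) M4" using Dn_n_step[OF hm le] by simp
  have R4: "M4 0 = int N \<and> M4 1 = 1 \<and> M4 11 = int (N+1) \<and> M4 12 = int ((N+1)*(N+1)) \<and> M4 13 = 8 \<and>
     M4 2 = int m \<and> M4 5 = int (rt m - 1)" using f4 I3 by simp
  have "NInv N m (Suc n) M4"
    unfolding NInv_def RB_def using R4 v4 I3 g4 le hm by simp
  moreover have "runs Prog (Cells N) (21, M) (3 + 3 + (36 * (n div m + 1 - 1) + 5) + 18) (21, M4)"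
    by (rule runs_trans[OF runs_trans[OF runs_trans[OF r1 r2] r3] r4])
  moreover have "3 + 3 + (36 * (n div m + 1 - 1) + 5) + 18 = 29 + 36 * (n div m)" by simp
  ultimately show ?thesis by metis
qed

lemma n_loop:
  "NInv N m n M \<Longrightarrow> \<exists>M'. runs Prog (Cells N) (21, M) ((N + 1 - n) * (29 + 36 * (N div m)) + 4) (83, M') \<and>
     RB N M' \<and> M' 2 = int m \<and> good N (Dn N m (N+1) 1) M'"
proof (induction "N + 1 - n" arbitrary: n M)
  case 0
  note I = 0(2)[unfolded NInv_def RB_def]
  have n: "n = N + 1" using 0 I by simp
  have "\<not> 0 < M 0 - M 3 + M 1" using I n by simp
  then obtain M' where r: "runs Prog (Cells N) (21, M) 4 (83, M')" and f: "\<forall>x. x \<noteq> 10 \<longrightarrow> M' x = M x"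
    using ntest_f[of M "Cells N"] cells_reg by blast
  have fr: "\<forall>x. 16 \<le> x \<longrightarrow> M' x = M x" using f by simp
  have g0: "good N (Dn N m n 1) M" using I by blast
  have "good N (Dn N m (N+1) 1) M'" using good_frame_small[OF g0 fr] n by simp
  moreover have "RB N M' \<and> M' 2 = int m" using I f by (simp add: RB_def)
  ultimately show ?case using r 0(1) by (metis add_0 mult_zero_left)
next
  case (Suc d)
  note I = Suc(3)[unfolded NInv_def RB_def]
  have le: "n \<le> N" using Suc(2) by simp
  obtain M1 where r1: "runs Prog (Cells N) (21, M) (29 + 36 * (n div m)) (21, M1)" and i1: "NInv N m (Suc n) M1"
    using n_step[OF Suc(3) le] by blast
  have "d = N + 1 - Suc n" using Suc(2) by simp
  then obtain M' where r2: "runs Prog (Cells N) (21, M1) (d * (29 + 36 * (N div m)) + 4) (83, M')"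
     and rest: "RB N M' \<and> M' 2 = int m \<and> good N (Dn N m (N+1) 1) M'"
    using Suc(1)[of "Suc n" M1] i1 by auto
  have "runs Prog (Cells N) (21, M) (29 + 36 * (n div m) + (d * (29 + 36 * (N div m)) + 4)) (83, M')"
    by (rule runs_trans[OF r1 r2])
  moreover have "29 + 36 * (n div m) + (d * (29 + 36 * (N div m)) + 4) \<le> (N + 1 - n) * (29 + 36 * (N div m)) + 4"
  proof -
    have "n div m \<le> N div m" using le by (rule div_le_mono)
    thus ?thesis using Suc(2)[symmetric] by simp
  qed
  ultimately show ?case using rest runs_mono by blast
qed

definition OInv where
  "OInv N m M \<longleftrightarrow> RB N M \<and> M 2 = int m \<and> good N (Dn N m 0 1) M \<and> 1 \<le> m \<and> m \<le> N + 1"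

lemma Dn_m_step: "1 \<le> m \<Longrightarrow> m \<le> N \<Longrightarrow> Dn N (Suc m) 0 1 = Dn N m (N+1) 1"
  unfolding Dn_def Region_def by auto

lemma o_step:
  assumes inv: "OInv N m M" and le: "m \<le> N"
  shows "\<exists>M'. runs Prog (Cells N) (7, M) (19 + (N + 1) * (29 + 36 * (N div m))) (7, M') \<and> OInv N (Suc m) M'"
proof -
  note I = inv[unfolded OInv_def RB_def]
  have hm: "1 \<le> m" using I by auto
  have "0 < M 0 - M 2 + M 1" using I le by simp
  then obtain M1 where r1: "runs Prog (Cells N) (7, M) 3 (11, M1)" and f1: "\<forall>x. x \<noteq> 10 \<longrightarrow> M1 x = M x"
    using otest_t[of M "Cells N"] cells_reg by blast
  have reg: "(0, m-1, m-1, 0) \<in> Region N" using le by (auto simp: Region_def)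
  have M1r: "M1 1 = 1" "M1 13 = 8" "M1 11 = int (N+1)" "M1 12 = int ((N+1)*(N+1))" "M1 2 = int m"
    using f1 I by simp_all
  obtain M2 where r2: "runs Prog (Cells N) (11, M1) 10 (21, M2)" and f2: "\<forall>x. x \<notin> {3,5,9,10,15} \<longrightarrow> M2 x = M1 x"
    and v5: "M2 5 = M1 (Ad (cd (N+1) (m-1) (m-1) 0) 0) - M1 1" and v3: "M2 3 = 0"
    using obody_syn[of M1 "N+1" m "Cells N", OF M1r hm cells_reg cells_key[OF reg, unfolded Adk_eq]] by blast
  have "(0, m-1, m-1, 0) \<in> Dn N m 0 1" using reg hm by (auto simp: Dn_def)
  hence "M (Ad (cd (N+1) (m-1) (m-1) 0) 0) = int (f_le_m (m-1) (m-1))"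
    using I by (auto simp: good_def Adk_eq val_def)
  moreover have "f_le_m (m-1) (m-1) = rt m" using rt_Suc[of "m-1"] f_eq_fle[of "m-1"] hm by simp
  moreover have "rt m \<ge> 1" using rt_pos[OF hm] .
  ultimately have r5: "M2 5 = int (rt m - 1)" using v5 f1 I by (simp add: of_nat_diff)
  have fr2: "\<forall>x. 16 \<le> x \<longrightarrow> M2 x = M x" using f1 f2 by simp
  have g0: "good N (Dn N m 0 1) M" using I by blast
  have g2: "good N (Dn N m 0 1) M2" by (rule good_frame_small[OF g0 fr2])
  have R2: "M2 0 = int N \<and> M2 1 = 1 \<and> M2 11 = int (N+1) \<and> M2 12 = int ((N+1)*(N+1)) \<and> M2 13 = 8 \<and>
     M2 2 = int m" using f1 f2 I by simp
  have "NInv N m 0 M2" unfolding NInv_def RB_def using R2 v3 r5 g2 le hm by simp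
  then obtain M3 where r3: "runs Prog (Cells N) (21, M2) ((N + 1 - 0) * (29 + 36 * (N div m)) + 4) (83, M3)"
    and i3: "RB N M3 \<and> M3 2 = int m \<and> good N (Dn N m (N+1) 1) M3"
    using n_loop by blast
  obtain M4 where r4: "runs Prog (Cells N) (83, M3) 2 (7, M4)" and f4: "\<forall>x. x \<noteq> 2 \<longrightarrow> M4 x = M3 x"
    and v4: "M4 2 = M3 2 + M3 1"
    using nextm_syn[of "Cells N" M3] cells_reg by blast
  have fr4: "\<forall>x. 16 \<le> x \<longrightarrow> M4 x = M3 x" using f4 by simp
  have g3: "good N (Dn N m (N+1) 1) M3" using i3 by blast
  have g4: "good N (Dn N (Suc m) 0 1) M4"
    using good_frame_small[OF g3 fr4] Dn_m_step[OF hm le] by simp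
  have R4: "M4 0 = int N \<and> M4 1 = 1 \<and> M4 11 = int (N+1) \<and> M4 12 = int ((N+1)*(N+1)) \<and> M4 13 = 8"
    using f4 i3 by (simp add: RB_def)
  have "OInv N (Suc m) M4" unfolding OInv_def RB_def using R4 i3 v4 g4 le hm by (simp add: RB_def)
  moreover have "runs Prog (Cells N) (7, M) (3 + 10 + ((N + 1 - 0) * (29 + 36 * (N div m)) + 4) + 2) (7, M4)"
    by (rule runs_trans[OF runs_trans[OF runs_trans[OF r1 r2] r3] r4])
  moreover have "3 + 10 + ((N + 1 - 0) * (29 + 36 * (N div m)) + 4) + 2 = 19 + (N + 1) * (29 + 36 * (N div m))" by simp
  ultimately show ?thesis by metis
qed

lemma o_loop:
  "OInv N m M \<Longrightarrow> \<exists>M'. runs Prog (Cells N) (7, M) ((\<Sum>i=m..N. 19 + (N + 1) * (29 + 36 * (N div i))) + 4) (85, M') \<and>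
     good N (Dn N (N+1) 0 1) M'"
proof (induction "N + 1 - m" arbitrary: m M)
  case 0
  note I = 0(2)[unfolded OInv_def RB_def]
  have m: "m = N + 1" using 0 I by simp
  have "\<not> 0 < M 0 - M 2 + M 1" using I m by simp
  then obtain M' where r: "runs Prog (Cells N) (7, M) 4 (85, M')" and f: "\<forall>x. x \<noteq> 10 \<longrightarrow> M' x = M x"
    using otest_f[of M "Cells N"] cells_reg by blast
  have fr: "\<forall>x. 16 \<le> x \<longrightarrow> M' x = M x" using f by simp
  have g0: "good N (Dn N m 0 1) M" using I by blast
  have "good N (Dn N (N+1) 0 1) M'" using good_frame_small[OF g0 fr] m by simp
  moreover have "(\<Sum>i=m..N. 19 + (N + 1) * (29 + 36 * (N div i))) = 0" using m by simp
  ultimately show ?case using r by (metis add_0)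
next
  case (Suc d)
  have le: "m \<le> N" using Suc(2) by simp
  obtain M1 where r1: "runs Prog (Cells N) (7, M) (19 + (N + 1) * (29 + 36 * (N div m))) (7, M1)" and i1: "OInv N (Suc m) M1"
    using o_step[OF Suc(3) le] by blast
  have "d = N + 1 - Suc m" using Suc(2) by simp
  then obtain M' where r2: "runs Prog (Cells N) (7, M1) ((\<Sum>i=Suc m..N. 19 + (N + 1) * (29 + 36 * (N div i))) + 4) (85, M')"
     and g: "good N (Dn N (N+1) 0 1) M'"
    using Suc(1)[of "Suc m" M1] i1 by auto
  have r: "runs Prog (Cells N) (7, M) (19 + (N + 1) * (29 + 36 * (N div m)) + ((\<Sum>i=Suc m..N. 19 + (N + 1) * (29 + 36 * (N div i))) + 4)) (85, M')"
    by (rule runs_trans[OF r1 r2])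
  have s: "(\<Sum>i=m..N. 19 + (N + 1) * (29 + 36 * (N div i))) = 19 + (N + 1) * (29 + 36 * (N div m)) + (\<Sum>i=Suc m..N. 19 + (N + 1) * (29 + 36 * (N div i)))"
    using le by (rule sum.atLeast_Suc_atMost)
  have eq: "19 + (N + 1) * (29 + 36 * (N div m)) + ((\<Sum>i=Suc m..N. 19 + (N + 1) * (29 + 36 * (N div i))) + 4) = (\<Sum>i=m..N. 19 + (N + 1) * (29 + 36 * (N div i))) + 4"
    unfolding s by simp
  from r have "runs Prog (Cells N) (7, M) ((\<Sum>i=m..N. 19 + (N + 1) * (29 + 36 * (N div i))) + 4) (85, M')"
    by (simp only: eq)
  thus ?case using g by blast
qed

lemma setup_ok:
  "\<exists>M. runs Prog (Cells N) (init N) 7 (7, M) \<and> OInv N 1 M"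
proof -
  have c16: "16 \<in> Cells N"
  proof -
    have "(0,0,0,0) \<in> Region N" by (simp add: Region_def)
    from cells_key[OF this] show ?thesis by (simp add: Adk_eq Ad_def cd_def)
  qed
  obtain M where r: "runs Prog (Cells N) (0, (\<lambda>_. 0)(0 := int N)) 7 (7, M)" and
    v: "M 0 = int N" "M 1 = 1" "M 11 = int N + 1" "M 12 = (int N + 1) * (int N + 1)"
     "M 13 = 8" "M 2 = 1" "M 16 = 1" and z: "\<forall>x. x \<notin> {0,1,2,9,11,12,13,16} \<longrightarrow> M x = 0"
    using setup_syn[of "Cells N" N] cells_reg c16 by blast
  have "good N (Dn N 1 0 1) M"
    unfolding good_def
  proof
    fix k assume k: "k \<in> Dn N 1 0 1"
    then obtain a where ka: "k = (0,a,0,0)" "a \<le> N" unfolding Dn_def Region_def by auto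
    show "M (Adk N k) = val k"
    proof (cases "a = 0")
      case True thus ?thesis using ka v by (simp add: Adk_eq Ad_def cd_def val_def fle_0)
    next
      case False
      hence "Adk N k > 16" using ka by (simp add: Adk_eq Ad_def cd_def)
      hence "Adk N k \<notin> {0,1,2,9,11,12,13,16}" by auto
      hence "M (Adk N k) = 0" using z by blast
      thus ?thesis using ka False by (simp add: val_def fle_0)
    qed
  qed
  hence "OInv N 1 M" using v unfolding OInv_def RB_def by (simp add: algebra_simps)
  thus ?thesis using r by (auto simp: init_def)
qed


definition Hs :: "nat \<Rightarrow> nat" where "Hs N = (\<Sum>b=1..N. N div b)"

lemma harm_bound: "N \<ge> 1 \<Longrightarrow> (\<Sum>b=1..N. 1 / real b) \<le> 1 + ln (real N)"
proof (induction N rule: nat_induct_at_least)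
  case base
  then show ?case by simp
next
  case (Suc n)
  have n: "real n \<ge> 1" using Suc(1) by simp
  have "ln (real n / real (Suc n)) \<le> real n / real (Suc n) - 1"
    by (rule ln_le_minus_one) (use n in simp)
  also have "real n / real (Suc n) - 1 = - (1 / real (Suc n))"
    by (simp add: field_simps)
  finally have "ln (real n) - ln (real (Suc n)) \<le> - (1 / real (Suc n))"
    using n by (simp add: ln_div)
  hence "1 / real (Suc n) \<le> ln (real (Suc n)) - ln (real n)" by linarith
  moreover have "(\<Sum>b=1..Suc n. 1 / real b) = (\<Sum>b=1..n. 1 / real b) + 1 / real (Suc n)"
    by simp
  ultimately show ?case using Suc(2) by linarith
qed

lemma div_real_le: "m > 0 \<Longrightarrow> real (n div m) \<le> real n / real m"
proof -
  assume m: "m > 0"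
  have "(n div m) * m \<le> n" by (rule div_times_less_eq_dividend)
  hence "real (n div m) * real m \<le> real n" by (metis of_nat_le_iff of_nat_mult)
  thus ?thesis using m by (simp add: pos_le_divide_eq)
qed

lemma Hs_bound: "N \<ge> 1 \<Longrightarrow> real (Hs N) \<le> real N * (1 + ln (real N))"
proof -
  assume N: "N \<ge> 1"
  have "real (Hs N) = (\<Sum>b=1..N. real (N div b))" by (simp add: Hs_def)
  also have "\<dots> \<le> (\<Sum>b=1..N. real N * (1 / real b))"
    by (intro sum_mono) (simp add: div_real_le)
  also have "\<dots> = real N * (\<Sum>b=1..N. 1 / real b)" by (simp add: sum_distrib_left)
  also have "\<dots> \<le> real N * (1 + ln (real N))"
    by (intro mult_left_mono harm_bound N) simp
  finally show ?thesis .
qed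

lemma ev_bound:
  fixes x L H :: real
  assumes x: "x \<ge> 3" and L: "L \<ge> 1" and H: "0 \<le> H" "H \<le> x * (1 + L)"
  shows "11 + 19 * x + 29 * (x * (x + 1)) + 36 * ((x + 1) * H) \<le> 300 * (x^2 * L)"
    and "16 + (x+1)*(x+1) + 3 * ((x + 1) * H) \<le> 300 * (x^2 * L)"
proof -
  define P where "P = x^2 * L"
  have "3^2 \<le> x^2" using x by (intro power_mono) auto
  hence x2: "9 \<le> x^2" by simp
  have "x^2 * 1 \<le> x^2 * L" by (rule mult_left_mono) (use L in auto)
  hence P1: "x^2 \<le> P" unfolding P_def by simp
  have "x * 1 \<le> x * x" by (rule mult_left_mono) (use x in auto)
  hence Px: "x \<le> P" using P1 by (simp add: power2_eq_square)
  have P9: "9 \<le> P" using P1 x2 by linarith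
  have "x * (1 + L) \<le> x * (2 * L)" by (rule mult_left_mono) (use L x in auto)
  hence H2: "H \<le> 2 * x * L" using H by simp
  have x1: "x + 1 \<le> 2 * x" using x by linarith
  have A: "(x + 1) * H \<le> 4 * P"
  proof -
    have "(x + 1) * H \<le> (2 * x) * (2 * x * L)" by (rule mult_mono[OF x1 H2]) (use x H in auto)
    thus ?thesis by (simp add: P_def power2_eq_square algebra_simps)
  qed
  have B: "x * (x + 1) \<le> 2 * P"
  proof -
    have "x * (x + 1) \<le> x * (2 * x)" by (rule mult_left_mono[OF x1]) (use x in auto)
    thus ?thesis using P1 by (simp add: power2_eq_square)
  qed
  have C: "(x + 1) * (x + 1) \<le> 4 * P"
  proof -
    have "(x + 1) * (x + 1) \<le> (2 * x) * (2 * x)" by (rule mult_mono[OF x1 x1]) (use x in auto)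
    thus ?thesis using P1 by (simp add: power2_eq_square)
  qed
  show "11 + 19 * x + 29 * (x * (x + 1)) + 36 * ((x + 1) * H) \<le> 300 * (x^2 * L)"
    using A B Px P9 unfolding P_def by linarith
  show "16 + (x+1)*(x+1) + 3 * ((x + 1) * H) \<le> 300 * (x^2 * L)"
    using A C Px P9 unfolding P_def by linarith
qed

lemma bigo_both:
  "(\<lambda>N. real (11 + 19 * N + 29 * (N * (N + 1)) + 36 * ((N + 1) * Hs N))) \<in> O(\<lambda>N. real N ^ 2 * ln (real N))"
  "(\<lambda>N. real (16 + (N+1)*(N+1) + 3 * ((N + 1) * Hs N))) \<in> O(\<lambda>N. real N ^ 2 * ln (real N))"
proof -
  have key: "real (11 + 19 * N + 29 * (N * (N + 1)) + 36 * ((N + 1) * Hs N)) \<le> 300 * (real N ^ 2 * ln (real N)) \<and>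
     real (16 + (N+1)*(N+1) + 3 * ((N + 1) * Hs N)) \<le> 300 * (real N ^ 2 * ln (real N))" if N: "N \<ge> 3" for N
  proof -
    have x: "real N \<ge> 3" using N by simp
    have L: "ln (real N) \<ge> 1" using x exp_le by (subst ln_ge_iff) auto
    have H: "0 \<le> real (Hs N)" "real (Hs N) \<le> real N * (1 + ln (real N))" using Hs_bound[of N] N by auto
    have e1: "real (11 + 19 * N + 29 * (N * (N + 1)) + 36 * ((N + 1) * Hs N)) = 11 + 19 * real N + 29 * (real N * (real N + 1)) + 36 * ((real N + 1) * real (Hs N))" by (simp add: algebra_simps)
    have e2: "real (16 + (N+1)*(N+1) + 3 * ((N + 1) * Hs N)) = 16 + (real N+1)*(real N+1) + 3 * ((real N + 1) * real (Hs N))" by (simp add: algebra_simps)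
    show ?thesis unfolding e1 e2 using ev_bound[OF x L H] by blast
  qed
  have pos: "0 \<le> real N ^ 2 * ln (real N)" if "N \<ge> 3" for N :: nat
    using that by (intro mult_nonneg_nonneg) auto
  show "(\<lambda>N. real (11 + 19 * N + 29 * (N * (N + 1)) + 36 * ((N + 1) * Hs N))) \<in> O(\<lambda>N. real N ^ 2 * ln (real N))"
    by (rule bigoI[where c = 300]) (use key pos in \<open>auto simp: eventually_at_top_linorder intro!: exI[of _ 3]\<close>)
  show "(\<lambda>N. real (16 + (N+1)*(N+1) + 3 * ((N + 1) * Hs N))) \<in> O(\<lambda>N. real N ^ 2 * ln (real N))"
    by (rule bigoI[where c = 300]) (use key pos in \<open>auto simp: eventually_at_top_linorder intro!: exI[of _ 3]\<close>)
qed


lemma step_halt: "halted P s \<Longrightarrow> step P s = s" by (simp add: step_def)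
lemma exec_halt: "halted P s \<Longrightarrow> exec P k s = s"
  by (induction k) (simp_all add: exec_Suc step_halt)
lemma acc_halt: "halted P s \<Longrightarrow> acc_set P k s = {}"
  by (induction k) (simp_all add: acc_Suc step_halt accessed_def)

definition Tb :: "nat \<Rightarrow> nat" where
  "Tb N = 7 + ((\<Sum>i=1..N. 19 + (N + 1) * (29 + 36 * (N div i))) + 4)"

lemma run_all: "\<exists>M. runs Prog (Cells N) (init N) (Tb N) (85, M) \<and> good N (Dn N (N+1) 0 1) M"
proof -
  obtain M1 where r1: "runs Prog (Cells N) (init N) 7 (7, M1)" and i1: "OInv N 1 M1" using setup_ok by blast
  obtain M2 where r2: "runs Prog (Cells N) (7, M1) ((\<Sum>i=1..N. 19 + (N + 1) * (29 + 36 * (N div i))) + 4) (85, M2)"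
    and g: "good N (Dn N (N+1) 0 1) M2" using o_loop[OF i1] by blast
  show ?thesis using runs_trans[OF r1 r2] g by (auto simp: Tb_def)
qed

lemma final_state:
  "\<exists>M. exec Prog (Tb N) (init N) = (85, M) \<and> acc_set Prog (Tb N) (init N) \<subseteq> Cells N \<and> good N (Dn N (N+1) 0 1) M"
proof -
  obtain M where r: "runs Prog (Cells N) (init N) (Tb N) (85, M)" and g: "good N (Dn N (N+1) 0 1) M"
    using run_all by blast
  then obtain k where k: "k \<le> Tb N" "exec Prog k (init N) = (85, M)" "acc_set Prog k (init N) \<subseteq> Cells N"
    unfolding runs_def by blast
  have h: "halted Prog (85, M)" by (simp add: halted_def Prog_nth)
  have T: "Tb N = k + (Tb N - k)" using k by simp
  have "exec Prog (Tb N) (init N) = (85, M)"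
    by (subst T, simp only: exec_add k(2) exec_halt[OF h])
  moreover have "acc_set Prog (Tb N) (init N) \<subseteq> Cells N"
    by (subst T, simp only: acc_add k(2) acc_halt[OF h]) (use k(3) in simp)
  ultimately show ?thesis using g by blast
qed

fun qkey :: "query \<Rightarrow> nat \<times> nat \<times> nat \<times> nat" where
  "qkey (QRt n) = (0, n - 1, n - 1, 0)"
| "qkey (QF n) = (0, n, n, 0)"
| "qkey (QFm n m) = (2, n, m, n div m)"
| "qkey (QFle n m) = (0, n, m, 0)"
| "qkey (QFmmu n m \<mu>) = (1, n, m, \<mu>)"
| "qkey (QFlemu n m \<mu>) = (2, n, m, \<mu>)"
| "qkey (QBin m \<mu>) = (3, 0, m, \<mu>)"

lemma Dn_final: "Dn N (N+1) 0 1 = Region N"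
proof (intro set_eqI iffI)
  fix k assume "k \<in> Region N"
  then obtain t a b c where k: "k = (t,a,b,c)" "(t,a,b,c) \<in> Region N" by (cases k) auto
  have "b \<le> N" using region_bound[OF k(2)] by simp
  thus "k \<in> Dn N (N+1) 0 1" using k by (simp add: Dn_def)
qed (auto simp: Dn_def)

lemma qkey_ok:
  assumes "valid_query N q"
  shows "qkey q \<in> Region N \<and> val (qkey q) = qval q"
  using assms
proof (cases q)
  case (QRt n)
  have "f_le_m (n-1) (n-1) = rt n" using rt_Suc[of "n-1"] f_eq_fle[of "n-1"] assms QRt by simp
  thus ?thesis using assms QRt by (auto simp: Region_def val_def)
next
  case (QF n)
  thus ?thesis using assms by (auto simp: Region_def val_def f_eq_fle)
next
  case (QFm n m)
  have m: "1 \<le> m" "m \<le> n" "n \<le> N" using assms QFm by auto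
  have "1 \<le> n div m" using m by (simp add: less_eq_div_iff_mult_less_eq)
  moreover have "(n div m) * m \<le> n" by (rule div_times_less_eq_dividend)
  ultimately show ?thesis using m QFm fm_eq[OF m(1), of n] by (auto simp: Region_def val_def)
next
  case (QFle n m)
  thus ?thesis using assms by (auto simp: Region_def val_def)
next
  case (QFmmu n m \<mu>)
  thus ?thesis using assms by (auto simp: Region_def val_def)
next
  case (QFlemu n m \<mu>)
  thus ?thesis using assms by (auto simp: Region_def val_def)
next
  case (QBin m \<mu>)
  thus ?thesis using assms by (auto simp: Region_def val_def)
qed

definition PB :: "nat \<Rightarrow> (nat \<times> nat) set" where "PB N = {(b,c). 1 \<le> b \<and> 1 \<le> c \<and> c*b \<le> N}"

lemma PB_eq: "PB N = Sigma {1..N} (\<lambda>b. {1..N div b})"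
proof (intro set_eqI iffI)
  fix p assume "p \<in> PB N"
  then obtain b c where p: "p = (b,c)" "1 \<le> b" "1 \<le> c" "c*b \<le> N" unfolding PB_def by auto
  have "b \<le> c*b" using p by simp
  hence "b \<le> N" using p by linarith
  moreover have "c \<le> N div b" using p by (simp add: less_eq_div_iff_mult_less_eq)
  ultimately show "p \<in> Sigma {1..N} (\<lambda>b. {1..N div b})" using p by auto
next
  fix p assume "p \<in> Sigma {1..N} (\<lambda>b. {1..N div b})"
  then obtain b c where p: "p = (b,c)" "1 \<le> b" "1 \<le> c" "c \<le> N div b" by auto
  hence "c*b \<le> N" by (simp add: less_eq_div_iff_mult_less_eq)
  thus "p \<in> PB N" using p by (auto simp: PB_def)
qed

lemma card_PB: "card (PB N) = Hs N"
  unfolding PB_eq Hs_def by (subst card_SigmaI) auto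

lemma finite_PB: "finite (PB N)" unfolding PB_eq by auto

lemma Region_sub: "Region N \<subseteq> ((\<lambda>(a,b). (0,a,b,0)) ` ({..N} \<times> {..N}) \<union> (\<lambda>(a,b,c). (1,a,b,c)) ` ({..N} \<times> PB N))
   \<union> ((\<lambda>(a,b,c). (2,a,b,c)) ` ({..N} \<times> PB N) \<union> (\<lambda>(b,c). (3,0,b,c)) ` PB N)"
proof
  fix k assume k: "k \<in> Region N"
  obtain t a b c where kk: "k = (t,a,b,c)" by (cases k) auto
  have bd: "a \<le> N" using region_bound k kk by blast
  consider "t = 0 \<and> a \<le> N \<and> b \<le> N \<and> c = 0" | "(t = 1 \<or> t = 2) \<and> 1 \<le> b \<and> 1 \<le> c \<and> c*b \<le> a \<and> a \<le> N"
    | "t = 3 \<and> a = 0 \<and> 1 \<le> b \<and> 1 \<le> c \<and> c*b \<le> N" using k kk unfolding Region_def by auto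
  thus "k \<in> ((\<lambda>(a,b). (0,a,b,0)) ` ({..N} \<times> {..N}) \<union> (\<lambda>(a,b,c). (1,a,b,c)) ` ({..N} \<times> PB N))
   \<union> ((\<lambda>(a,b,c). (2,a,b,c)) ` ({..N} \<times> PB N) \<union> (\<lambda>(b,c). (3,0,b,c)) ` PB N)"
  proof cases
    case 1 thus ?thesis using kk by force
  next
    case 2
    hence "(b,c) \<in> PB N" by (auto simp: PB_def)
    thus ?thesis using 2 kk by force
  next
    case 3
    hence "(b,c) \<in> PB N" by (auto simp: PB_def)
    thus ?thesis using 3 kk by force
  qed
qed

lemma finite_Region: "finite (Region N)"
  by (rule finite_subset[OF Region_sub]) (auto intro: finite_PB)

lemma card_Region: "card (Region N) \<le> (N+1)*(N+1) + 3 * ((N+1) * Hs N)"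
proof -
  have fin: "finite (PB N)" by (rule finite_PB)
  define A where "A = (\<lambda>(a,b). (0::nat,a,b,0::nat)) ` ({..N} \<times> {..N})"
  define B where "B = (\<lambda>(a,b,c). (1::nat,a,b,c)) ` ({..N} \<times> PB N)"
  define C where "C = (\<lambda>(a,b,c). (2::nat,a,b,c)) ` ({..N} \<times> PB N)"
  define D where "D = (\<lambda>(b,c). (3::nat,0::nat,b,c)) ` PB N"
  have c1: "card A \<le> (N+1)*(N+1)"
    using card_image_le[of "{..N} \<times> {..N}" "\<lambda>(a,b). (0::nat,a,b,0::nat)"] by (simp add: card_cartesian_product A_def)
  have c2: "card B \<le> (N+1) * Hs N"
    using card_image_le[of "{..N} \<times> PB N" "\<lambda>(a,b,c). (1::nat,a,b,c)"] fin by (simp add: card_cartesian_product card_PB B_def)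
  have c3: "card C \<le> (N+1) * Hs N"
    using card_image_le[of "{..N} \<times> PB N" "\<lambda>(a,b,c). (2::nat,a,b,c)"] fin by (simp add: card_cartesian_product card_PB C_def)
  have c4: "card D \<le> (N+1) * Hs N"
  proof -
    have "card D \<le> Hs N" using card_image_le[of "PB N" "\<lambda>(b,c). (3::nat,0::nat,b,c)"] fin card_PB[of N] by (simp add: D_def)
    also have "\<dots> \<le> (N+1) * Hs N" by simp
    finally show ?thesis .
  qed
  have finall: "finite (A \<union> B \<union> (C \<union> D))" using fin by (auto simp: A_def B_def C_def D_def)
  have "card (Region N) \<le> card (A \<union> B \<union> (C \<union> D))"
    by (rule card_mono[OF finall]) (use Region_sub in \<open>simp add: A_def B_def C_def D_def\<close>)
  also have "\<dots> \<le> card (A \<union> B) + card (C \<union> D)" by (rule card_Un_le)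
  also have "\<dots> \<le> (card A + card B) + (card C + card D)" by (intro add_mono card_Un_le)
  finally show ?thesis using c1 c2 c3 c4 by linarith
qed

lemma card_Cells: "card (Cells N) \<le> 16 + (N+1)*(N+1) + 3 * ((N+1) * Hs N)"
proof -
  have "card (Cells N) \<le> card {..<16::nat} + card (Adk N ` Region N)"
    unfolding Cells_def by (rule card_Un_le)
  also have "card (Adk N ` Region N) \<le> card (Region N)" by (rule card_image_le[OF finite_Region])
  finally show ?thesis using card_Region[of N] by simp
qed

lemma finite_Cells: "finite (Cells N)" unfolding Cells_def using finite_Region by simp


lemma Tb_eq: "Tb N = 11 + 19 * N + 29 * (N * (N + 1)) + 36 * ((N + 1) * Hs N)"
proof -
  have "(\<Sum>i=1..N. 19 + (N + 1) * (29 + 36 * (N div i))) = (\<Sum>i=1..N. 19 + (N + 1) * 29) + (\<Sum>i=1..N. 36 * ((N + 1) * (N div i)))"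
    by (simp add: sum.distrib algebra_simps)
  also have "\<dots> = N * (19 + (N + 1) * 29) + 36 * ((N + 1) * Hs N)"
    by (simp add: Hs_def sum_distrib_left)
  finally show ?thesis unfolding Tb_def by (simp add: algebra_simps)
qed

theorem lemma3p4:
  "\<exists>(P :: prog) (addr :: nat \<Rightarrow> query \<Rightarrow> nat) (T :: nat \<Rightarrow> nat) (S :: nat \<Rightarrow> nat).
     (\<forall>N \<ge> 1.
        halted P (exec P (T N) (init N)) \<and>
        card (used_cells P (T N) (init N)) \<le> S N \<and>
        (\<forall>q. valid_query N q \<longrightarrow> snd (exec P (T N) (init N)) (addr N q) = qval q)) \<and>
     (\<lambda>N. real (T N)) \<in> O(\<lambda>N. real N ^ 2 * ln (real N)) \<and>
     (\<lambda>N. real (S N)) \<in> O(\<lambda>N. real N ^ 2 * ln (real N))"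
proof -
  define addr where "addr = (\<lambda>N q. Adk N (qkey q))"
  define S where "S = (\<lambda>N. 16 + (N+1)*(N+1) + 3 * ((N + 1) * Hs N))"
  have main: "halted Prog (exec Prog (Tb N) (init N)) \<and> card (used_cells Prog (Tb N) (init N)) \<le> S N \<and>
      (\<forall>q. valid_query N q \<longrightarrow> snd (exec Prog (Tb N) (init N)) (addr N q) = qval q)" for N
  proof -
    obtain M where e: "exec Prog (Tb N) (init N) = (85, M)" and a: "acc_set Prog (Tb N) (init N) \<subseteq> Cells N"
      and g: "good N (Dn N (N+1) 0 1) M" using final_state by blast
    have h: "halted Prog (85, M)" by (simp add: halted_def Prog_nth)
    have u: "used_cells Prog (Tb N) (init N) \<subseteq> Cells N"
      using a unfolding used_cells_def acc_set_def by (auto simp: Cells_def)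
    have "card (used_cells Prog (Tb N) (init N)) \<le> card (Cells N)" by (rule card_mono[OF finite_Cells u])
    also have "\<dots> \<le> S N" using card_Cells[of N] by (simp add: S_def)
    finally have c: "card (used_cells Prog (Tb N) (init N)) \<le> S N" .
    have q: "snd (exec Prog (Tb N) (init N)) (addr N q) = qval q" if v: "valid_query N q" for q
    proof -
      have "qkey q \<in> Dn N (N+1) 0 1" using qkey_ok[OF v] Dn_final by simp
      hence "M (Adk N (qkey q)) = val (qkey q)" using g by (simp add: good_def)
      thus ?thesis using qkey_ok[OF v] e by (simp add: addr_def)
    qed
    show ?thesis using h e c q by simp
  qed
  have t: "(\<lambda>N. real (Tb N)) = (\<lambda>N. real (11 + 19 * N + 29 * (N * (N + 1)) + 36 * ((N + 1) * Hs N)))"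
    by (simp only: Tb_eq)
  have s: "(\<lambda>N. real (S N)) = (\<lambda>N. real (16 + (N+1)*(N+1) + 3 * ((N + 1) * Hs N)))"
    by (simp add: S_def)
  show ?thesis
    apply (rule exI[of _ Prog], rule exI[of _ addr], rule exI[of _ Tb], rule exI[of _ S])
    using main bigo_both unfolding t s by blast
qed


end
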